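(* Let $B_J=L+U\in\mathbb R^{n\times n}$ with $L$ strictly lower triangular and $U$ strictly upper triangular, and assume all the matrices $L^{(j)}_c$ ($1\le j\le n-1$), $U^{(j)}_c$ ($2\le j\le n$), $L^{(i)}_r$ ($2\le i\le n$), $U^{(i)}_r$ ($1\le i\le n-1$) are nonzero. Consider the splittings $\mathcal B_{FTC}=(L^{(1)}_c,\dots,L^{(n-1)}_c,U^{(n)}_c,\dots,U^{(2)}_c)$ and $\mathcal B_{FTR}=(L^{(2)}_r,\dots,L^{(n)}_r,U^{(n-1)}_r,\dots,U^{(1)}_r)$ of $B_J$ (each of order $2n-2$), and the symmetric Gauss–Seidel matrix $B_{sGS}=(I-U)^{-1}L(I-L)^{-1}U$. Then $T(\mathcal B_{FTC})$, $T(\mathcal B_{FTR})$ and $B_{sGS}$ all have the same nonzero eigenvalues.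
   Context: For $j\in\{1,\dots,n-1\}$, $L^{(j)}_c$ is the $n\times n$ matrix equal to $L$ in column $j$ (rows $i\ge j+1$) and zero elsewhere; for $j\in\{2,\dots,n\}$, $U^{(j)}_c$ equals $U$ in column $j$ (rows $i\le j-1$) and is zero elsewhere; for $i\in\{2,\dots,n\}$, $L^{(i)}_r$ equals $L$ in row $i$ (columns $j\le i-1$) and is zero elsewhere; for $i\in\{1,\dots,n-1\}$, $U^{(i)}_r$ equals $U$ in row $i$ (columns $j\ge i+1$) and is zero elsewhere. For $B\in\mathbb R^{n\times n}$, a splitting of $B$ of order $d\ge1$ is an ordered $d$-tuple $\mathcal B=(B_1,\dots,B_d)$ of real $n\times n$ matrices with $B_p\neq O$ for all $p$, $\sum_{p=1}^d B_p=B$, and $B_p\circ B_q=O$ (Hadamard product) for $p\ne q$. The iteration matrix of $\mathcal B$ is the $dn\times dn$ matrix $T(\mathcal B)=(I_{dn}-\mathcal L)^{-1}\mathcal U$, where $\mathcal L,\mathcal U$ are $d\times d$ block matrices with $n\times n$ blocks, $\mathcal L_{ij}=B_j$ if $i>j$ and $O$ otherwise, $\mathcal U_{ij}=B_j$ if $i\le j$ and $O$ otherwise. *)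

theory Defs
  imports "Jordan_Normal_Form.Matrix" "Jordan_Normal_Form.Char_Poly"
begin

(* Inverse of a square matrix (meaningful when the matrix is invertible). *)
definition inv_mat :: "real mat \<Rightarrow> real mat" where
  "inv_mat A = (SOME B. B \<in> carrier_mat (dim_row A) (dim_row A) \<and>
       A * B = 1\<^sub>m (dim_row A) \<and> B * A = 1\<^sub>m (dim_row A))"

(* 0-based indices: column / row pieces of L and U (paper's index j is our j-1) *)
definition Lc :: "nat \<Rightarrow> real mat \<Rightarrow> nat \<Rightarrow> real mat" where
  "Lc n L j = mat n n (\<lambda>(i,k). if k = j \<and> i > j then L $$ (i,k) else 0)"
definition Uc :: "nat \<Rightarrow> real mat \<Rightarrow> nat \<Rightarrow> real mat" where
  "Uc n U j = mat n n (\<lambda>(i,k). if k = j \<and> i < j then U $$ (i,k) else 0)"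
definition Lr :: "nat \<Rightarrow> real mat \<Rightarrow> nat \<Rightarrow> real mat" where
  "Lr n L i = mat n n (\<lambda>(r,k). if r = i \<and> k < i then L $$ (r,k) else 0)"
definition Ur :: "nat \<Rightarrow> real mat \<Rightarrow> nat \<Rightarrow> real mat" where
  "Ur n U i = mat n n (\<lambda>(r,k). if r = i \<and> k > i then U $$ (r,k) else 0)"

definition blockL :: "nat \<Rightarrow> real mat list \<Rightarrow> real mat" where
  "blockL n Bs = mat (length Bs * n) (length Bs * n)
     (\<lambda>(i,j). if i div n > j div n then (Bs ! (j div n)) $$ (i mod n, j mod n) else 0)"
definition blockU :: "nat \<Rightarrow> real mat list \<Rightarrow> real mat" where
  "blockU n Bs = mat (length Bs * n) (length Bs * n)
     (\<lambda>(i,j). if i div n \<le> j div n then (Bs ! (j div n)) $$ (i mod n, j mod n) else 0)"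

definition iter_mat :: "nat \<Rightarrow> real mat list \<Rightarrow> real mat" where
  "iter_mat n Bs = inv_mat (1\<^sub>m (length Bs * n) - blockL n Bs) * blockU n Bs"

definition nonzero_eigs :: "real mat \<Rightarrow> complex set" where
  "nonzero_eigs A = {e. e \<noteq> 0 \<and> eigenvalue (map_mat complex_of_real A) e}"

definition B_FTC :: "nat \<Rightarrow> real mat \<Rightarrow> real mat \<Rightarrow> real mat list" where
  "B_FTC n L U = map (Lc n L) [0..<n-1] @ map (Uc n U) (rev [1..<n])"
definition B_FTR :: "nat \<Rightarrow> real mat \<Rightarrow> real mat \<Rightarrow> real mat list" where
  "B_FTR n L U = map (Lr n L) [1..<n] @ map (Ur n U) (rev [0..<n-1])"

definition B_sGS :: "nat \<Rightarrow> real mat \<Rightarrow> real mat \<Rightarrow> real mat" where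
  "B_sGS n L U = inv_mat (1\<^sub>m n - U) * L * inv_mat (1\<^sub>m n - L) * U"

end

theory Submission
  imports Defs
begin

lemma inv_mat_props:
  assumes A: "A \<in> carrier_mat n n" and d: "det A \<noteq> 0"
  shows "inv_mat A \<in> carrier_mat n n \<and> A * inv_mat A = 1\<^sub>m n \<and> inv_mat A * A = 1\<^sub>m n"
proof -
  have "A \<in> Units (ring_mat TYPE(real) n ())" by (rule det_non_zero_imp_unit[OF A d])
  then obtain B where B: "B \<in> carrier_mat n n" "A * B = 1\<^sub>m n" "B * A = 1\<^sub>m n"
    unfolding Units_def ring_mat_def by auto
  have dr: "dim_row A = n" using A by auto
  show ?thesis unfolding inv_mat_def dr
    by (rule someI[of "\<lambda>B. B \<in> carrier_mat n n \<and> A * B = 1\<^sub>m n \<and> B * A = 1\<^sub>m n"], use B in auto)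
qed

lemma det_unit_lower:
  assumes A: "A \<in> carrier_mat n n" and lo: "\<And>i j. i < j \<Longrightarrow> j < n \<Longrightarrow> A $$ (i,j) = 0"
    and dg: "\<And>i. i < n \<Longrightarrow> A $$ (i,i) = 1"
  shows "det A = 1"
proof -
  have "det A = prod_list (diag_mat A)" by (rule det_lower_triangular[OF lo A])
  also have "diag_mat A = map (\<lambda>_. 1) [0..<n]" unfolding diag_mat_def using A dg by auto
  also have "prod_list \<dots> = 1" by (induct n) auto
  finally show ?thesis .
qed

lemma det_unit_upper:
  assumes A: "A \<in> carrier_mat n n" and up: "\<And>i j. j < i \<Longrightarrow> i < n \<Longrightarrow> A $$ (i,j) = 0"
    and dg: "\<And>i. i < n \<Longrightarrow> A $$ (i,i) = 1"
  shows "det A = 1"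
proof -
  have "det A = prod_list (diag_mat A)" by (rule det_upper_triangular[OF _ A], use up A in \<open>auto simp: upper_triangular_def\<close>)
  also have "diag_mat A = map (\<lambda>_. 1) [0..<n]" unfolding diag_mat_def using A dg by auto
  also have "prod_list \<dots> = 1" by (induct n) auto
  finally show ?thesis .
qed

lemma sum_blocks: fixes d n :: nat shows "(\<Sum>j<d*n. f j) = (\<Sum>q<d. \<Sum>r<n. f (q*n+r))"
proof (induct d)
  case 0 then show ?case by simp
next
  case (Suc d)
  have eq: "{..<Suc d * n} = {..<d*n} \<union> {d*n..<d*n+n}" by auto
  have "(\<Sum>j<Suc d*n. f j) = (\<Sum>j<d*n. f j) + (\<Sum>j\<in>{d*n..<d*n+n}. f j)"
    unfolding eq by (rule sum.union_disjoint) auto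
  also have "(\<Sum>j\<in>{d*n..<d*n+n}. f j) = (\<Sum>r<n. f (d*n+r))"
    by (rule sum.reindex_bij_witness[of _ "\<lambda>r. d*n+r" "\<lambda>j. j - d*n"]) auto
  finally show ?case using Suc by simp
qed

definition wt :: "complex \<Rightarrow> nat \<Rightarrow> nat \<Rightarrow> complex" where
  "wt lam p q = (if q < p then 1 else inverse lam)"

definition mv :: "(nat \<Rightarrow> nat \<Rightarrow> complex) \<Rightarrow> nat \<Rightarrow> (nat \<Rightarrow> complex) \<Rightarrow> nat \<Rightarrow> complex" where
  "mv a n f i = (\<Sum>r<n. a i r * f r)"

lemma split2m: fixes m :: nat shows "(\<Sum>q<2*m. f q) = (\<Sum>q<m. f q) + (\<Sum>q\<in>{m..<2*m}. f q)"
proof -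
  have eq: "{..<2*m} = {..<m} \<union> {m..<2*m}" by auto
  show ?thesis unfolding eq by (rule sum.union_disjoint) auto
qed

lemma Ysplit:
  fixes m :: nat and C :: "nat \<Rightarrow> nat \<Rightarrow> complex"
  assumes lam: "lam \<noteq> 0"
    and S1: "(\<Sum>q<m. C q i) = A" and S2: "(\<Sum>q\<in>{m..<2*m}. C q i) = B"
  shows "(\<Sum>q<2*m. wt lam m q * C q i) = A + inverse lam * B"
    and "(\<Sum>q<2*m. wt lam 0 q * C q i) = inverse lam * (A + B)"
proof -
  have "(\<Sum>q<2*m. wt lam m q * C q i) = (\<Sum>q<m. wt lam m q * C q i) + (\<Sum>q\<in>{m..<2*m}. wt lam m q * C q i)"
    by (rule split2m)
  also have "(\<Sum>q<m. wt lam m q * C q i) = (\<Sum>q<m. C q i)"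
    by (rule sum.cong) (auto simp: wt_def)
  also have "(\<Sum>q\<in>{m..<2*m}. wt lam m q * C q i) = inverse lam * (\<Sum>q\<in>{m..<2*m}. C q i)"
    by (auto simp: wt_def sum_distrib_left intro!: sum.cong)
  finally show "(\<Sum>q<2*m. wt lam m q * C q i) = A + inverse lam * B" using S1 S2 by simp
  have "(\<Sum>q<2*m. wt lam 0 q * C q i) = inverse lam * (\<Sum>q<2*m. C q i)"
    by (auto simp: wt_def sum_distrib_left)
  also have "(\<Sum>q<2*m. C q i) = A + B" using S1 S2 split2m[of "\<lambda>q. C q i" m] by simp
  finally show "(\<Sum>q<2*m. wt lam 0 q * C q i) = inverse lam * (A + B)" .
qed

lemma lowfix:
  assumes lz: "\<And>i j. i < n \<Longrightarrow> j < n \<Longrightarrow> i \<le> j \<Longrightarrow> l i j = 0"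
    and fx: "\<And>i. i < n \<Longrightarrow> a i = mv l n a i"
  shows "\<And>i. i < n \<Longrightarrow> a i = 0"
proof -
  fix i show "i < n \<Longrightarrow> a i = 0"
  proof (induct i rule: less_induct)
    case (less i)
    have "a i = (\<Sum>r<n. l i r * a r)" using fx[OF less(2)] by (simp add: mv_def)
    also have "\<dots> = 0"
    proof (rule sum.neutral, intro ballI)
      fix r assume r: "r \<in> {..<n}"
      show "l i r * a r = 0"
      proof (cases "r < i")
        case True then show ?thesis using less(1)[of r] r by auto
      next
        case False then show ?thesis using lz[of i r] r less(2) by auto
      qed
    qed
    finally show ?case .
  qed
qed

definition BC :: "nat \<Rightarrow> (nat \<Rightarrow> nat \<Rightarrow> complex) \<Rightarrow> (nat \<Rightarrow> nat \<Rightarrow> complex) \<Rightarrow> nat \<Rightarrow> nat \<Rightarrow> nat \<Rightarrow> complex" where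
  "BC m l u q i r = (if q < m then (if r = q \<and> q < i then l i r else 0)
      else (if r = 2*m - q \<and> i < r then u i r else 0))"

lemma CY_L: assumes "q < m" shows "mv (BC m l u q) (Suc m) f i = (if q < i then l i q * f q else 0)"
proof -
  have "mv (BC m l u q) (Suc m) f i = (\<Sum>r<Suc m. if r = q then (if q < i then l i q * f q else 0) else 0)"
    unfolding mv_def BC_def using assms by (intro sum.cong) auto
  also have "\<dots> = (if q < i then l i q * f q else 0)" using assms by (simp add: sum.delta)
  finally show ?thesis .
qed

lemma CY_U: assumes "m \<le> q" "q < 2*m"
  shows "mv (BC m l u q) (Suc m) f i = (if i < 2*m-q then u i (2*m-q) * f (2*m-q) else 0)"
proof -
  have "mv (BC m l u q) (Suc m) f i = (\<Sum>r<Suc m. if r = 2*m-q then (if i < 2*m-q then u i (2*m-q) * f (2*m-q) else 0) else 0)"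
    unfolding mv_def BC_def using assms by (intro sum.cong) auto
  also have "\<dots> = (if i < 2*m-q then u i (2*m-q) * f (2*m-q) else 0)" using assms by (simp add: sum.delta)
  finally show ?thesis .
qed

lemma ftc_S1:
  fixes m :: nat and C :: "nat \<Rightarrow> nat \<Rightarrow> complex"
  assumes lz: "\<And>i j. i < Suc m \<Longrightarrow> j < Suc m \<Longrightarrow> i \<le> j \<Longrightarrow> l i j = 0"
    and i: "i < Suc m"
    and Cf: "\<And>q. q < m \<Longrightarrow> C q i = (if q < i then l i q * a q else 0)"
  shows "(\<Sum>q<m. C q i) = mv l (Suc m) a i"
proof -
  have "mv l (Suc m) a i = (\<Sum>q<m. l i q * a q) + l i m * a m" by (simp add: mv_def)
  also have "l i m = 0" using lz[of i m] i by auto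
  also have "(\<Sum>q<m. l i q * a q) = (\<Sum>q<m. C q i)"
  proof (rule sum.cong)
    fix q assume q: "q \<in> {..<m}"
    show "l i q * a q = C q i" using Cf[of q] q lz[of i q] i by (cases "q < i") auto
  qed simp
  finally show ?thesis by simp
qed

lemma ftc_S2:
  fixes m :: nat and C :: "nat \<Rightarrow> nat \<Rightarrow> complex"
  assumes uz: "\<And>i j. i < Suc m \<Longrightarrow> j < Suc m \<Longrightarrow> j \<le> i \<Longrightarrow> u i j = 0"
    and i: "i < Suc m"
    and Cf: "\<And>q. m \<le> q \<Longrightarrow> q < 2*m \<Longrightarrow> C q i = (if i < 2*m-q then u i (2*m-q) * b (2*m-q) else 0)"
  shows "(\<Sum>q\<in>{m..<2*m}. C q i) = mv u (Suc m) b i"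
proof -
  have "mv u (Suc m) b i = u i 0 * b 0 + (\<Sum>k<m. u i (Suc k) * b (Suc k))"
    unfolding mv_def by (rule sum.lessThan_Suc_shift)
  also have "u i 0 = 0" using uz[of i 0] i by auto
  also have "(\<Sum>k<m. u i (Suc k) * b (Suc k)) = (\<Sum>k<m. C (2*m - 1 - k) i)"
  proof (rule sum.cong)
    fix k assume k: "k \<in> {..<m}"
    then have e: "2*m - (2*m-1-k) = Suc k" by auto
    show "u i (Suc k) * b (Suc k) = C (2*m - 1 - k) i"
      using Cf[of "2*m-1-k"] k e uz[of i "Suc k"] i by auto
  qed simp
  also have "\<dots> = (\<Sum>q\<in>{m..<2*m}. C q i)"
    by (rule sum.reindex_bij_witness[of _ "\<lambda>q. 2*m-1-q" "\<lambda>k. 2*m-1-k"]) auto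
  finally show ?thesis by simp
qed

lemma ftc_diag:
  fixes m :: nat and C :: "nat \<Rightarrow> nat \<Rightarrow> complex"
  assumes hL0: "\<And>r i. r < m \<Longrightarrow> i < Suc m \<Longrightarrow> i \<le> r \<Longrightarrow> C r i = 0"
    and q: "q < m"
  shows "(\<Sum>r<2*m. wt lam q r * C r q) = (\<Sum>r<2*m. wt lam m r * C r q)"
proof (rule sum.cong)
  fix r assume r: "r \<in> {..<2*m}"
  show "wt lam q r * C r q = wt lam m r * C r q"
  proof (cases "r < m")
    case True then show ?thesis using hL0[of r q] q by (cases "r < q") (auto simp: wt_def)
  next
    case False then show ?thesis using q by (auto simp: wt_def)
  qed
qed simp

lemma ftc_anti:
  fixes m :: nat and C :: "nat \<Rightarrow> nat \<Rightarrow> complex"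
  assumes hU0: "\<And>r i. m \<le> r \<Longrightarrow> r < 2*m \<Longrightarrow> i < Suc m \<Longrightarrow> 2*m - r \<le> i \<Longrightarrow> C r i = 0"
    and lam: "lam \<noteq> 0" and c: "1 \<le> c" "c \<le> m"
  shows "(\<Sum>r<2*m. wt lam (2*m-c) r * C r c) = lam * (\<Sum>r<2*m. wt lam 0 r * C r c)"
  unfolding sum_distrib_left
proof (rule sum.cong)
  fix r assume r: "r \<in> {..<2*m}"
  show "wt lam (2*m-c) r * C r c = lam * (wt lam 0 r * C r c)"
  proof (cases "r < 2*m-c")
    case True then show ?thesis using lam by (auto simp: wt_def)
  next
    case False then show ?thesis using hU0[of r c] c r by (auto simp: wt_def)
  qed
qed simp

lemma ftc_core:
  fixes m :: nat and lam :: complex and l u :: "nat \<Rightarrow> nat \<Rightarrow> complex"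
  assumes m: "1 \<le> m" and lam: "lam \<noteq> 0"
    and lz: "\<And>i j. i < Suc m \<Longrightarrow> j < Suc m \<Longrightarrow> i \<le> j \<Longrightarrow> l i j = 0"
    and uz: "\<And>i j. i < Suc m \<Longrightarrow> j < Suc m \<Longrightarrow> j \<le> i \<Longrightarrow> u i j = 0"
  shows "(\<exists>Y. (\<exists>p<2*m. \<exists>i<Suc m. Y p i \<noteq> 0) \<and>
            (\<forall>p<2*m. \<forall>i<Suc m. Y p i = (\<Sum>q<2*m. wt lam p q * mv (BC m l u q) (Suc m) (Y q) i)))
     \<longleftrightarrow> (\<exists>a b. (\<exists>i<Suc m. b i \<noteq> 0) \<and>
            (\<forall>i<Suc m. a i = mv l (Suc m) a i + inverse lam * mv u (Suc m) b i) \<and>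
            (\<forall>i<Suc m. b i = mv l (Suc m) a i + mv u (Suc m) b i))"
proof
  assume "\<exists>Y. (\<exists>p<2*m. \<exists>i<Suc m. Y p i \<noteq> 0) \<and>
            (\<forall>p<2*m. \<forall>i<Suc m. Y p i = (\<Sum>q<2*m. wt lam p q * mv (BC m l u q) (Suc m) (Y q) i))"
  then obtain Y where nz: "\<exists>p<2*m. \<exists>i<Suc m. Y p i \<noteq> 0"
    and blk: "\<And>p i. p < 2*m \<Longrightarrow> i < Suc m \<Longrightarrow> Y p i = (\<Sum>q<2*m. wt lam p q * mv (BC m l u q) (Suc m) (Y q) i)"
    by blast
  define C where "C q i = mv (BC m l u q) (Suc m) (Y q) i" for q i
  define a where "a i = Y m i" for i
  define b where "b i = lam * Y 0 i" for i
  have blk': "\<And>p i. p < 2*m \<Longrightarrow> i < Suc m \<Longrightarrow> Y p i = (\<Sum>q<2*m. wt lam p q * C q i)"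
    using blk unfolding C_def by blast
  have hL0: "\<And>r i. r < m \<Longrightarrow> i < Suc m \<Longrightarrow> i \<le> r \<Longrightarrow> C r i = 0"
    unfolding C_def by (simp add: CY_L)
  have hU0: "\<And>r i. m \<le> r \<Longrightarrow> r < 2*m \<Longrightarrow> i < Suc m \<Longrightarrow> 2*m - r \<le> i \<Longrightarrow> C r i = 0"
    unfolding C_def by (simp add: CY_U)
  have diag: "Y q q = a q" if q: "q < m" for q
  proof -
    have "Y q q = (\<Sum>r<2*m. wt lam q r * C r q)" using blk'[of q q] q by auto
    also have "\<dots> = (\<Sum>r<2*m. wt lam m r * C r q)" by (rule ftc_diag[where C=C and m=m, OF hL0 q])
    also have "\<dots> = Y m q" using blk'[of m q] q m by auto
    finally show ?thesis unfolding a_def .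
  qed
  have anti: "Y (2*m-c) c = b c" if c: "1 \<le> c" "c \<le> m" for c
  proof -
    have "Y (2*m-c) c = (\<Sum>r<2*m. wt lam (2*m-c) r * C r c)" using blk'[of "2*m-c" c] c by auto
    also have "\<dots> = lam * (\<Sum>r<2*m. wt lam 0 r * C r c)" by (rule ftc_anti[where C=C and m=m, OF hU0 lam c])
    also have "\<dots> = lam * Y 0 c" using blk'[of 0 c] c m by auto
    finally show ?thesis unfolding b_def .
  qed
  have CfL: "\<And>q i. q < m \<Longrightarrow> C q i = (if q < i then l i q * a q else 0)"
    unfolding C_def by (simp add: CY_L diag)
  have CfU: "C q i = (if i < 2*m-q then u i (2*m-q) * b (2*m-q) else 0)" if q: "m \<le> q" "q < 2*m" for q i
  proof -
    have e: "2*m - (2*m-q) = q" using q by auto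
    show ?thesis unfolding C_def using CY_U[OF q, of l u "Y q" i] anti[of "2*m-q"] q e by auto
  qed
  have Ym: "Y m i = mv l (Suc m) a i + inverse lam * mv u (Suc m) b i"
   and Y0: "Y 0 i = inverse lam * (mv l (Suc m) a i + mv u (Suc m) b i)" if i: "i < Suc m" for i
  proof -
    have S1: "(\<Sum>q<m. C q i) = mv l (Suc m) a i" using ftc_S1[where l=l and m=m and C=C and a=a, OF lz i] CfL by blast
    have S2: "(\<Sum>q\<in>{m..<2*m}. C q i) = mv u (Suc m) b i" using ftc_S2[where u=u and m=m and C=C and b=b, OF uz i] CfU by blast
    show "Y m i = mv l (Suc m) a i + inverse lam * mv u (Suc m) b i"
      using blk'[of m i] Ysplit(1)[where C=C and m=m and i=i, OF lam S1 S2] m i by auto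
    show "Y 0 i = inverse lam * (mv l (Suc m) a i + mv u (Suc m) b i)"
      using blk'[of 0 i] Ysplit(2)[where C=C and m=m and i=i, OF lam S1 S2] m i by auto
  qed
  have E1: "\<forall>i<Suc m. a i = mv l (Suc m) a i + inverse lam * mv u (Suc m) b i"
    using Ym unfolding a_def by auto
  have E2: "\<forall>i<Suc m. b i = mv l (Suc m) a i + mv u (Suc m) b i"
    using Y0 lam unfolding b_def by auto
  have bnz: "\<exists>i<Suc m. b i \<noteq> 0"
  proof (rule ccontr)
    assume "\<not> ?thesis"
    then have b0: "\<And>i. i < Suc m \<Longrightarrow> b i = 0" by auto
    have mu0: "mv u (Suc m) b i = 0" for i unfolding mv_def by (simp add: b0)
    have a0: "\<And>i. i < Suc m \<Longrightarrow> a i = 0"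
      by (rule lowfix[where l=l and n="Suc m", OF lz], use E1 mu0 in auto)
    have C0: "C q i = 0" if "q < 2*m" for q i
    proof (cases "q < m")
      case True then show ?thesis using CfL a0 by auto
    next
      case False then show ?thesis using CfU[of q i] b0[of "2*m-q"] that by auto
    qed
    from nz obtain p i where "p < 2*m" "i < Suc m" "Y p i \<noteq> 0" by blast
    then show False using blk'[of p i] C0 by auto
  qed
  show "\<exists>a b. (\<exists>i<Suc m. b i \<noteq> 0) \<and>
            (\<forall>i<Suc m. a i = mv l (Suc m) a i + inverse lam * mv u (Suc m) b i) \<and>
            (\<forall>i<Suc m. b i = mv l (Suc m) a i + mv u (Suc m) b i)"
    using bnz E1 E2 by blast
next
  assume "\<exists>a b. (\<exists>i<Suc m. b i \<noteq> 0) \<and>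
            (\<forall>i<Suc m. a i = mv l (Suc m) a i + inverse lam * mv u (Suc m) b i) \<and>
            (\<forall>i<Suc m. b i = mv l (Suc m) a i + mv u (Suc m) b i)"
  then obtain a b where bnz: "\<exists>i<Suc m. b i \<noteq> 0"
    and E1: "\<And>i. i < Suc m \<Longrightarrow> a i = mv l (Suc m) a i + inverse lam * mv u (Suc m) b i"
    and E2: "\<And>i. i < Suc m \<Longrightarrow> b i = mv l (Suc m) a i + mv u (Suc m) b i" by blast
  define C where "C q i = (if q < m then (if q < i then l i q * a q else 0)
     else (if i < 2*m-q then u i (2*m-q) * b (2*m-q) else 0))" for q i
  define Y where "Y p i = (\<Sum>q<2*m. wt lam p q * C q i)" for p i
  have hL0: "\<And>r i. r < m \<Longrightarrow> i < Suc m \<Longrightarrow> i \<le> r \<Longrightarrow> C r i = 0"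
    unfolding C_def by auto
  have hU0: "\<And>r i. m \<le> r \<Longrightarrow> r < 2*m \<Longrightarrow> i < Suc m \<Longrightarrow> 2*m - r \<le> i \<Longrightarrow> C r i = 0"
    unfolding C_def by auto
  have CfL: "\<And>q i. q < m \<Longrightarrow> C q i = (if q < i then l i q * a q else 0)"
    unfolding C_def by auto
  have CfU: "\<And>q i. m \<le> q \<Longrightarrow> q < 2*m \<Longrightarrow> C q i = (if i < 2*m-q then u i (2*m-q) * b (2*m-q) else 0)"
    unfolding C_def by auto
  have Ym: "Y m i = a i" and Y0: "Y 0 i = inverse lam * b i" if i: "i < Suc m" for i
  proof -
    have S1: "(\<Sum>q<m. C q i) = mv l (Suc m) a i" using ftc_S1[where l=l and m=m and C=C and a=a, OF lz i] CfL by blast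
    have S2: "(\<Sum>q\<in>{m..<2*m}. C q i) = mv u (Suc m) b i" using ftc_S2[where u=u and m=m and C=C and b=b, OF uz i] CfU by blast
    show "Y m i = a i" using Ysplit(1)[where C=C and m=m and i=i, OF lam S1 S2] E1[OF i] unfolding Y_def by simp
    show "Y 0 i = inverse lam * b i" using Ysplit(2)[where C=C and m=m and i=i, OF lam S1 S2] E2[OF i] unfolding Y_def by simp
  qed
  have diag: "Y q q = a q" if q: "q < m" for q
    using ftc_diag[where C=C and m=m, OF hL0 q, of lam] Ym[of q] q unfolding Y_def by auto
  have anti: "Y (2*m-c) c = b c" if c: "1 \<le> c" "c \<le> m" for c
    using ftc_anti[where C=C and m=m, OF hU0 lam c] Y0[of c] c lam unfolding Y_def by auto
  have CC: "mv (BC m l u q) (Suc m) (Y q) i = C q i" if q: "q < 2*m" for q i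
  proof (cases "q < m")
    case True then show ?thesis by (simp add: CY_L diag C_def)
  next
    case False
    have e: "2*m - (2*m-q) = q" using q by auto
    show ?thesis using CY_U[of m q l u "Y q" i] anti[of "2*m-q"] q False e by (auto simp: C_def)
  qed
  have blk: "\<forall>p<2*m. \<forall>i<Suc m. Y p i = (\<Sum>q<2*m. wt lam p q * mv (BC m l u q) (Suc m) (Y q) i)"
    by (auto simp: CC Y_def)
  from bnz obtain k where k: "k < Suc m" "b k \<noteq> 0" by blast
  have "Y 0 k \<noteq> 0" using Y0[OF k(1)] k lam by auto
  then have "\<exists>p<2*m. \<exists>i<Suc m. Y p i \<noteq> 0" using k m by (intro exI[of _ 0]) auto
  then show "\<exists>Y. (\<exists>p<2*m. \<exists>i<Suc m. Y p i \<noteq> 0) \<and>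
            (\<forall>p<2*m. \<forall>i<Suc m. Y p i = (\<Sum>q<2*m. wt lam p q * mv (BC m l u q) (Suc m) (Y q) i))"
    using blk by blast
qed

lemma mv_cong: assumes "\<And>r. r < n \<Longrightarrow> a i r \<noteq> 0 \<Longrightarrow> f r = g r"
  shows "mv a n f i = mv a n g i"
  unfolding mv_def by (rule sum.cong) (use assms in auto)

definition BR :: "nat \<Rightarrow> (nat \<Rightarrow> nat \<Rightarrow> complex) \<Rightarrow> (nat \<Rightarrow> nat \<Rightarrow> complex) \<Rightarrow> nat \<Rightarrow> nat \<Rightarrow> nat \<Rightarrow> complex" where
  "BR m l u q i r = (if q < m then (if i = Suc q \<and> r < Suc q then l i r else 0)
      else (if i = 2*m - 1 - q \<and> i < r then u i r else 0))"

lemma CYR_L: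
  assumes lz: "\<And>i j. i < Suc m \<Longrightarrow> j < Suc m \<Longrightarrow> i \<le> j \<Longrightarrow> l i j = 0"
    and q: "q < m"
  shows "mv (BR m l u q) (Suc m) f i = (if i = Suc q then mv l (Suc m) f i else 0)"
proof (cases "i = Suc q")
  case True
  show ?thesis unfolding mv_def BR_def using True q lz[of "Suc q"] by (auto intro!: sum.cong)
next
  case False then show ?thesis unfolding mv_def BR_def using q by auto
qed

lemma CYR_U:
  assumes uz: "\<And>i j. i < Suc m \<Longrightarrow> j < Suc m \<Longrightarrow> j \<le> i \<Longrightarrow> u i j = 0"
    and q: "m \<le> q" "q < 2*m"
  shows "mv (BR m l u q) (Suc m) f i = (if i = 2*m-1-q then mv u (Suc m) f i else 0)"
proof (cases "i = 2*m-1-q")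
  case True
  show ?thesis unfolding mv_def BR_def using True q uz[of "2*m-1-q"] by (auto intro!: sum.cong)
next
  case False then show ?thesis unfolding mv_def BR_def using q by auto
qed

lemma ftr_S1:
  fixes m :: nat and C :: "nat \<Rightarrow> nat \<Rightarrow> complex"
  assumes lz: "\<And>i j. i < Suc m \<Longrightarrow> j < Suc m \<Longrightarrow> i \<le> j \<Longrightarrow> l i j = 0"
    and i: "i < Suc m"
    and Cf: "\<And>q. q < m \<Longrightarrow> C q i = (if i = Suc q then mv l (Suc m) a i else 0)"
  shows "(\<Sum>q<m. C q i) = mv l (Suc m) a i"
proof (cases i)
  case 0
  have "mv l (Suc m) a i = 0" unfolding mv_def using lz[of 0] 0 by auto
  then show ?thesis using Cf 0 by simp
next
  case (Suc k)
  have "(\<Sum>q<m. C q i) = (\<Sum>q<m. if q = k then mv l (Suc m) a i else 0)"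
  proof (rule sum.cong)
    fix q assume "q \<in> {..<m}"
    then show "C q i = (if q = k then mv l (Suc m) a i else 0)" using Cf[of q] Suc by auto
  qed simp
  also have "\<dots> = mv l (Suc m) a i" using i Suc by (simp add: sum.delta)
  finally show ?thesis .
qed

lemma ftr_S2:
  fixes m :: nat and C :: "nat \<Rightarrow> nat \<Rightarrow> complex"
  assumes uz: "\<And>i j. i < Suc m \<Longrightarrow> j < Suc m \<Longrightarrow> j \<le> i \<Longrightarrow> u i j = 0"
    and i: "i < Suc m"
    and Cf: "\<And>q. m \<le> q \<Longrightarrow> q < 2*m \<Longrightarrow> C q i = (if i = 2*m-1-q then mv u (Suc m) b i else 0)"
  shows "(\<Sum>q\<in>{m..<2*m}. C q i) = mv u (Suc m) b i"
proof (cases "i = m")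
  case True
  have "mv u (Suc m) b i = 0" unfolding mv_def using uz[of m] True by auto
  moreover have "(\<Sum>q\<in>{m..<2*m}. C q i) = 0"
  proof (rule sum.neutral, intro ballI)
    fix q assume "q \<in> {m..<2*m}"
    then show "C q i = 0" using Cf[of q] True by auto
  qed
  ultimately show ?thesis by simp
next
  case False
  then have im: "i < m" using i by auto
  have "(\<Sum>q\<in>{m..<2*m}. C q i) = (\<Sum>q\<in>{m..<2*m}. if q = 2*m-1-i then mv u (Suc m) b i else 0)"
    by (rule sum.cong) (use im in \<open>auto simp: Cf\<close>)
  also have "\<dots> = mv u (Suc m) b i" using im by (simp add: sum.delta)
  finally show ?thesis .
qed

lemma ftr_diag:
  fixes m :: nat and C :: "nat \<Rightarrow> nat \<Rightarrow> complex"
  assumes hL: "\<And>s i. s < m \<Longrightarrow> i \<noteq> Suc s \<Longrightarrow> C s i = 0"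
    and q: "q < m" and r: "r \<le> q"
  shows "(\<Sum>s<2*m. wt lam q s * C s r) = (\<Sum>s<2*m. wt lam m s * C s r)"
proof (rule sum.cong)
  fix s assume s: "s \<in> {..<2*m}"
  show "wt lam q s * C s r = wt lam m s * C s r"
  proof (cases "s < m")
    case True then show ?thesis using hL[of s r] q r by (cases "r = Suc s") (auto simp: wt_def)
  next
    case False then show ?thesis using q by (auto simp: wt_def)
  qed
qed simp

lemma ftr_anti:
  fixes m :: nat and C :: "nat \<Rightarrow> nat \<Rightarrow> complex"
  assumes hU: "\<And>s i. m \<le> s \<Longrightarrow> s < 2*m \<Longrightarrow> i \<noteq> 2*m-1-s \<Longrightarrow> C s i = 0"
    and lam: "lam \<noteq> 0" and q: "m \<le> q" "q < 2*m" and r: "2*m-1-q < r"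
  shows "(\<Sum>s<2*m. wt lam q s * C s r) = lam * (\<Sum>s<2*m. wt lam 0 s * C s r)"
  unfolding sum_distrib_left
proof (rule sum.cong)
  fix s assume s: "s \<in> {..<2*m}"
  show "wt lam q s * C s r = lam * (wt lam 0 s * C s r)"
  proof (cases "s < q")
    case True then show ?thesis using lam by (auto simp: wt_def)
  next
    case False then show ?thesis using hU[of s r] q r s by (auto simp: wt_def)
  qed
qed simp

lemma ftr_core:
  fixes m :: nat and lam :: complex and l u :: "nat \<Rightarrow> nat \<Rightarrow> complex"
  assumes m: "1 \<le> m" and lam: "lam \<noteq> 0"
    and lz: "\<And>i j. i < Suc m \<Longrightarrow> j < Suc m \<Longrightarrow> i \<le> j \<Longrightarrow> l i j = 0"
    and uz: "\<And>i j. i < Suc m \<Longrightarrow> j < Suc m \<Longrightarrow> j \<le> i \<Longrightarrow> u i j = 0"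
  shows "(\<exists>Y. (\<exists>p<2*m. \<exists>i<Suc m. Y p i \<noteq> 0) \<and>
            (\<forall>p<2*m. \<forall>i<Suc m. Y p i = (\<Sum>q<2*m. wt lam p q * mv (BR m l u q) (Suc m) (Y q) i)))
     \<longleftrightarrow> (\<exists>a b. (\<exists>i<Suc m. b i \<noteq> 0) \<and>
            (\<forall>i<Suc m. a i = mv l (Suc m) a i + inverse lam * mv u (Suc m) b i) \<and>
            (\<forall>i<Suc m. b i = mv l (Suc m) a i + mv u (Suc m) b i))"
proof
  assume "\<exists>Y. (\<exists>p<2*m. \<exists>i<Suc m. Y p i \<noteq> 0) \<and>
            (\<forall>p<2*m. \<forall>i<Suc m. Y p i = (\<Sum>q<2*m. wt lam p q * mv (BR m l u q) (Suc m) (Y q) i))"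
  then obtain Y where nz: "\<exists>p<2*m. \<exists>i<Suc m. Y p i \<noteq> 0"
    and blk: "\<And>p i. p < 2*m \<Longrightarrow> i < Suc m \<Longrightarrow> Y p i = (\<Sum>q<2*m. wt lam p q * mv (BR m l u q) (Suc m) (Y q) i)"
    by blast
  define C where "C q i = mv (BR m l u q) (Suc m) (Y q) i" for q i
  define a where "a i = Y m i" for i
  define b where "b i = lam * Y 0 i" for i
  have blk': "\<And>p i. p < 2*m \<Longrightarrow> i < Suc m \<Longrightarrow> Y p i = (\<Sum>q<2*m. wt lam p q * C q i)"
    using blk unfolding C_def by blast
  have hL: "\<And>s i. s < m \<Longrightarrow> i \<noteq> Suc s \<Longrightarrow> C s i = 0"
    unfolding C_def using CYR_L[where l=l and m=m, OF lz] by simp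
  have hU: "\<And>s i. m \<le> s \<Longrightarrow> s < 2*m \<Longrightarrow> i \<noteq> 2*m-1-s \<Longrightarrow> C s i = 0"
    unfolding C_def using CYR_U[where u=u and m=m, OF uz] by simp
  have diag: "Y q r = a r" if q: "q < m" and r: "r \<le> q" for q r
  proof -
    have "Y q r = (\<Sum>s<2*m. wt lam q s * C s r)" using blk'[of q r] q r by auto
    also have "\<dots> = (\<Sum>s<2*m. wt lam m s * C s r)" by (rule ftr_diag[where C=C and m=m, OF hL q r])
    also have "\<dots> = Y m r" using blk'[of m r] q r m by auto
    finally show ?thesis unfolding a_def .
  qed
  have anti: "Y q r = b r" if q: "m \<le> q" "q < 2*m" and r: "2*m-1-q < r" "r < Suc m" for q r
  proof -
    have "Y q r = (\<Sum>s<2*m. wt lam q s * C s r)" using blk'[of q r] q r by auto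
    also have "\<dots> = lam * (\<Sum>s<2*m. wt lam 0 s * C s r)" by (rule ftr_anti[where C=C and m=m, OF hU lam q r(1)])
    also have "\<dots> = lam * Y 0 r" using blk'[of 0 r] r m by auto
    finally show ?thesis unfolding b_def .
  qed
  have CfL: "C q i = (if i = Suc q then mv l (Suc m) a i else 0)" if q: "q < m" for q i
  proof -
    have "mv l (Suc m) (Y q) (Suc q) = mv l (Suc m) a (Suc q)"
    proof (rule mv_cong)
      fix r assume r: "r < Suc m" "l (Suc q) r \<noteq> 0"
      then have "r \<le> q" using lz[of "Suc q" r] q by (cases "r \<le> q") auto
      then show "Y q r = a r" using diag q by auto
    qed
    then show ?thesis unfolding C_def using CYR_L[where l=l and m=m, OF lz q] by simp
  qed
  have CfU: "C q i = (if i = 2*m-1-q then mv u (Suc m) b i else 0)" if q: "m \<le> q" "q < 2*m" for q i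
  proof -
    have "mv u (Suc m) (Y q) (2*m-1-q) = mv u (Suc m) b (2*m-1-q)"
    proof (rule mv_cong)
      fix r assume r: "r < Suc m" "u (2*m-1-q) r \<noteq> 0"
      have "2*m-1-q < r"
      proof (rule ccontr)
        assume "\<not> 2*m-1-q < r"
        then have "r \<le> 2*m-1-q" by simp
        moreover have "2*m-1-q < Suc m" using q by simp
        ultimately have "u (2*m-1-q) r = 0" using uz r(1) by blast
        with r(2) show False by simp
      qed
      then show "Y q r = b r" using anti q r by auto
    qed
    then show ?thesis unfolding C_def using CYR_U[where u=u and m=m, OF uz q] by simp
  qed
  have Ym: "Y m i = mv l (Suc m) a i + inverse lam * mv u (Suc m) b i"
   and Y0: "Y 0 i = inverse lam * (mv l (Suc m) a i + mv u (Suc m) b i)" if i: "i < Suc m" for i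
  proof -
    have S1: "(\<Sum>q<m. C q i) = mv l (Suc m) a i"
      using ftr_S1[where l=l and m=m and C=C and a=a, OF lz i] CfL by blast
    have S2: "(\<Sum>q\<in>{m..<2*m}. C q i) = mv u (Suc m) b i"
      using ftr_S2[where u=u and m=m and C=C and b=b, OF uz i] CfU by blast
    show "Y m i = mv l (Suc m) a i + inverse lam * mv u (Suc m) b i"
      using blk'[of m i] Ysplit(1)[where C=C and m=m and i=i, OF lam S1 S2] m i by auto
    show "Y 0 i = inverse lam * (mv l (Suc m) a i + mv u (Suc m) b i)"
      using blk'[of 0 i] Ysplit(2)[where C=C and m=m and i=i, OF lam S1 S2] m i by auto
  qed
  have E1: "\<forall>i<Suc m. a i = mv l (Suc m) a i + inverse lam * mv u (Suc m) b i"
    using Ym unfolding a_def by auto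
  have E2: "\<forall>i<Suc m. b i = mv l (Suc m) a i + mv u (Suc m) b i"
    using Y0 lam unfolding b_def by auto
  have bnz: "\<exists>i<Suc m. b i \<noteq> 0"
  proof (rule ccontr)
    assume "\<not> ?thesis"
    then have b0: "\<And>i. i < Suc m \<Longrightarrow> b i = 0" by auto
    have mu0: "mv u (Suc m) b i = 0" for i unfolding mv_def by (simp add: b0)
    have a0: "\<And>i. i < Suc m \<Longrightarrow> a i = 0"
      by (rule lowfix[where l=l and n="Suc m", OF lz], use E1 mu0 in auto)
    have ml0: "mv l (Suc m) a i = 0" for i unfolding mv_def by (simp add: a0)
    have C0: "C q i = 0" if "q < 2*m" for q i
    proof (cases "q < m")
      case True then show ?thesis using CfL ml0 by auto
    next
      case False then show ?thesis using CfU[of q i] mu0 that by auto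
    qed
    from nz obtain p i where "p < 2*m" "i < Suc m" "Y p i \<noteq> 0" by blast
    then show False using blk'[of p i] C0 by auto
  qed
  show "\<exists>a b. (\<exists>i<Suc m. b i \<noteq> 0) \<and>
            (\<forall>i<Suc m. a i = mv l (Suc m) a i + inverse lam * mv u (Suc m) b i) \<and>
            (\<forall>i<Suc m. b i = mv l (Suc m) a i + mv u (Suc m) b i)"
    using bnz E1 E2 by blast
next
  assume "\<exists>a b. (\<exists>i<Suc m. b i \<noteq> 0) \<and>
            (\<forall>i<Suc m. a i = mv l (Suc m) a i + inverse lam * mv u (Suc m) b i) \<and>
            (\<forall>i<Suc m. b i = mv l (Suc m) a i + mv u (Suc m) b i)"
  then obtain a b where bnz: "\<exists>i<Suc m. b i \<noteq> 0"
    and E1: "\<And>i. i < Suc m \<Longrightarrow> a i = mv l (Suc m) a i + inverse lam * mv u (Suc m) b i"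
    and E2: "\<And>i. i < Suc m \<Longrightarrow> b i = mv l (Suc m) a i + mv u (Suc m) b i" by blast
  define C where "C q i = (if q < m then (if i = Suc q then mv l (Suc m) a i else 0)
     else (if i = 2*m-1-q then mv u (Suc m) b i else 0))" for q i
  define Y where "Y p i = (\<Sum>q<2*m. wt lam p q * C q i)" for p i
  have hL: "\<And>s i. s < m \<Longrightarrow> i \<noteq> Suc s \<Longrightarrow> C s i = 0"
    unfolding C_def by auto
  have hU: "\<And>s i. m \<le> s \<Longrightarrow> s < 2*m \<Longrightarrow> i \<noteq> 2*m-1-s \<Longrightarrow> C s i = 0"
    unfolding C_def by auto
  have CfL: "\<And>q i. q < m \<Longrightarrow> C q i = (if i = Suc q then mv l (Suc m) a i else 0)"
    unfolding C_def by auto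
  have CfU: "\<And>q i. m \<le> q \<Longrightarrow> q < 2*m \<Longrightarrow> C q i = (if i = 2*m-1-q then mv u (Suc m) b i else 0)"
    unfolding C_def by auto
  have Ym: "Y m i = a i" and Y0: "Y 0 i = inverse lam * b i" if i: "i < Suc m" for i
  proof -
    have S1: "(\<Sum>q<m. C q i) = mv l (Suc m) a i"
      using ftr_S1[where l=l and m=m and C=C and a=a, OF lz i] CfL by blast
    have S2: "(\<Sum>q\<in>{m..<2*m}. C q i) = mv u (Suc m) b i"
      using ftr_S2[where u=u and m=m and C=C and b=b, OF uz i] CfU by blast
    show "Y m i = a i" using Ysplit(1)[where C=C and m=m and i=i, OF lam S1 S2] E1[OF i] unfolding Y_def by simp
    show "Y 0 i = inverse lam * b i" using Ysplit(2)[where C=C and m=m and i=i, OF lam S1 S2] E2[OF i] unfolding Y_def by simp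
  qed
  have diag: "Y q r = a r" if q: "q < m" and r: "r \<le> q" for q r
    using ftr_diag[where C=C and m=m and lam=lam, OF hL q r] Ym[of r] q r unfolding Y_def by auto
  have anti: "Y q r = b r" if q: "m \<le> q" "q < 2*m" and r: "2*m-1-q < r" "r < Suc m" for q r
    using ftr_anti[where C=C and m=m, OF hU lam q r(1)] Y0[of r] r lam unfolding Y_def by auto
  have CC: "mv (BR m l u q) (Suc m) (Y q) i = C q i" if q: "q < 2*m" for q i
  proof (cases "q < m")
    case True
    have "mv l (Suc m) (Y q) (Suc q) = mv l (Suc m) a (Suc q)"
    proof (rule mv_cong)
      fix r assume r: "r < Suc m" "l (Suc q) r \<noteq> 0"
      then have "r \<le> q" using lz[of "Suc q" r] True by (cases "r \<le> q") auto
      then show "Y q r = a r" using diag True by auto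
    qed
    then show ?thesis using CYR_L[where l=l and m=m, OF lz True] CfL[OF True] by simp
  next
    case False
    then have q': "m \<le> q" "q < 2*m" using q by auto
    have "mv u (Suc m) (Y q) (2*m-1-q) = mv u (Suc m) b (2*m-1-q)"
    proof (rule mv_cong)
      fix r assume r: "r < Suc m" "u (2*m-1-q) r \<noteq> 0"
      have "2*m-1-q < r"
      proof (rule ccontr)
        assume "\<not> 2*m-1-q < r"
        then have "r \<le> 2*m-1-q" by simp
        moreover have "2*m-1-q < Suc m" using q' by simp
        ultimately have "u (2*m-1-q) r = 0" using uz r(1) by blast
        with r(2) show False by simp
      qed
      then show "Y q r = b r" using anti q' r by auto
    qed
    then show ?thesis using CYR_U[where u=u and m=m, OF uz q'] CfU[OF q'] by simp
  qed
  have blk: "\<forall>p<2*m. \<forall>i<Suc m. Y p i = (\<Sum>q<2*m. wt lam p q * mv (BR m l u q) (Suc m) (Y q) i)"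
    by (auto simp: CC Y_def)
  from bnz obtain k where k: "k < Suc m" "b k \<noteq> 0" by blast
  have "Y 0 k \<noteq> 0" using Y0[OF k(1)] k lam by auto
  then have "\<exists>p<2*m. \<exists>i<Suc m. Y p i \<noteq> 0" using k m by (intro exI[of _ 0]) auto
  then show "\<exists>Y. (\<exists>p<2*m. \<exists>i<Suc m. Y p i \<noteq> 0) \<and>
            (\<forall>p<2*m. \<forall>i<Suc m. Y p i = (\<Sum>q<2*m. wt lam p q * mv (BR m l u q) (Suc m) (Y q) i))"
    using blk by blast
qed


lemma eig_gen:
  fixes A Ai U :: "complex mat"
  assumes A: "A \<in> carrier_mat N N" and Ai: "Ai \<in> carrier_mat N N" and U: "U \<in> carrier_mat N N"
    and l: "Ai * A = 1\<^sub>m N" and r: "A * Ai = 1\<^sub>m N"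
  shows "eigenvalue (Ai * U) lam \<longleftrightarrow> (\<exists>X. X \<in> carrier_vec N \<and> X \<noteq> 0\<^sub>v N \<and> U *\<^sub>v X = lam \<cdot>\<^sub>v (A *\<^sub>v X))"
proof -
  have dr: "dim_row (Ai * U) = N" using Ai by simp
  have "(Ai * U *\<^sub>v X = lam \<cdot>\<^sub>v X) \<longleftrightarrow> (U *\<^sub>v X = lam \<cdot>\<^sub>v (A *\<^sub>v X))" if X: "X \<in> carrier_vec N" for X
  proof
    assume h: "Ai * U *\<^sub>v X = lam \<cdot>\<^sub>v X"
    have "U *\<^sub>v X = (A * Ai) *\<^sub>v (U *\<^sub>v X)" using r U X by (simp add: one_mult_mat_vec)
    also have "\<dots> = A *\<^sub>v (Ai * U *\<^sub>v X)" using A Ai U X by (simp add: assoc_mult_mat_vec)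
    also have "\<dots> = lam \<cdot>\<^sub>v (A *\<^sub>v X)" using h A X by (simp add: mult_mat_vec)
    finally show "U *\<^sub>v X = lam \<cdot>\<^sub>v (A *\<^sub>v X)" .
  next
    assume h: "U *\<^sub>v X = lam \<cdot>\<^sub>v (A *\<^sub>v X)"
    have "Ai * U *\<^sub>v X = Ai *\<^sub>v (U *\<^sub>v X)" using Ai U X by (simp add: assoc_mult_mat_vec)
    also have "\<dots> = lam \<cdot>\<^sub>v (Ai *\<^sub>v (A *\<^sub>v X))" using h Ai A X by (simp add: mult_mat_vec)
    also have "Ai *\<^sub>v (A *\<^sub>v X) = (Ai * A) *\<^sub>v X" using Ai A X by (simp add: assoc_mult_mat_vec)
    also have "\<dots> = X" using l X by (simp add: one_mult_mat_vec)
    finally show "Ai * U *\<^sub>v X = lam \<cdot>\<^sub>v X" .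
  qed
  then show ?thesis unfolding eigenvalue_def eigenvector_def dr by blast
qed

lemma mat_vec_sum: assumes "M \<in> carrier_mat N N" "X \<in> carrier_vec N" "j < N"
  shows "(M *\<^sub>v X) $ j = (\<Sum>k<N. M $$ (j,k) * X $ k)"
  using assms by (auto simp: scalar_prod_def atLeast0LessThan intro!: sum.cong)

lemma blockL_carrier: "blockL n Bs \<in> carrier_mat (length Bs * n) (length Bs * n)"
  unfolding blockL_def by simp
lemma blockU_carrier: "blockU n Bs \<in> carrier_mat (length Bs * n) (length Bs * n)"
  unfolding blockU_def by simp

lemma iter_eig:
  fixes Bs :: "real mat list" and lam :: complex
  assumes n: "0 < n" and lam: "lam \<noteq> 0"
  shows "eigenvalue (map_mat complex_of_real (iter_mat n Bs)) lam \<longleftrightarrow>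
    (\<exists>Y. (\<exists>p<length Bs. \<exists>i<n. Y p i \<noteq> 0) \<and>
       (\<forall>p<length Bs. \<forall>i<n. Y p i = (\<Sum>q<length Bs. wt lam p q * mv (\<lambda>i r. complex_of_real ((Bs!q) $$ (i,r))) n (Y q) i)))"
proof -
  define d where "d = length Bs"
  define N where "N = d * n"
  define Bf where "Bf q i r = complex_of_real ((Bs!q) $$ (i,r))" for q i r
  define A where "A = 1\<^sub>m N - blockL n Bs"
  have Ac: "A \<in> carrier_mat N N" unfolding A_def N_def d_def by (rule minus_carrier_mat[OF blockL_carrier])
  have Ae: "A $$ (j,k) = (if j = k then 1 else 0) - (if j div n > k div n then (Bs ! (k div n)) $$ (j mod n, k mod n) else 0)"
    if "j < N" "k < N" for j k
    unfolding A_def blockL_def using that by (simp add: N_def d_def)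
  have dA: "det A = 1"
  proof (rule det_unit_lower[OF Ac])
    fix j k assume "j < k" "k < N"
    moreover then have "j div n \<le> k div n" by (simp add: div_le_mono)
    ultimately show "A $$ (j,k) = 0" using Ae[of j k] by auto
  next
    fix j assume "j < N" then show "A $$ (j,j) = 1" using Ae[of j j] by auto
  qed
  define Ai where "Ai = inv_mat A"
  have Ai: "Ai \<in> carrier_mat N N" "A * Ai = 1\<^sub>m N" "Ai * A = 1\<^sub>m N"
    using inv_mat_props[OF Ac] dA unfolding Ai_def by auto
  have BUc: "blockU n Bs \<in> carrier_mat N N" using blockU_carrier[of n Bs] by (simp add: N_def d_def)
  have T: "map_mat complex_of_real (iter_mat n Bs) = map_mat complex_of_real Ai * map_mat complex_of_real (blockU n Bs)"
    unfolding iter_mat_def Ai_def[symmetric] A_def[symmetric] N_def[symmetric] d_def[symmetric]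
    by (rule of_real_hom.mat_hom_mult[OF Ai(1) BUc])
  have l: "map_mat complex_of_real Ai * map_mat complex_of_real A = 1\<^sub>m N"
    using of_real_hom.mat_hom_mult[OF Ai(1) Ac, symmetric] Ai(3) by (simp add: of_real_hom.mat_hom_one)
  have r: "map_mat complex_of_real A * map_mat complex_of_real Ai = 1\<^sub>m N"
    using of_real_hom.mat_hom_mult[OF Ac Ai(1), symmetric] Ai(2) by (simp add: of_real_hom.mat_hom_one)
  have eig: "eigenvalue (map_mat complex_of_real (iter_mat n Bs)) lam \<longleftrightarrow>
     (\<exists>X. X \<in> carrier_vec N \<and> X \<noteq> 0\<^sub>v N \<and> map_mat complex_of_real (blockU n Bs) *\<^sub>v X = lam \<cdot>\<^sub>v (map_mat complex_of_real A *\<^sub>v X))"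
    unfolding T by (rule eig_gen) (use Ac Ai BUc l r in auto)
  have divmod: "(q*n+r) div n = q" "(q*n+r) mod n = r" if "r < n" for q r
    using that n by auto
  have lt: "q*n+r < N" if "q < d" "r < n" for q r
  proof -
    have "q*n+r < q*n+n" using that by simp
    also have "\<dots> = Suc q * n" by simp
    also have "\<dots> \<le> d * n" using that by (intro mult_le_mono1) simp
    finally show ?thesis unfolding N_def .
  qed
  have key: "(map_mat complex_of_real (blockU n Bs) *\<^sub>v X = lam \<cdot>\<^sub>v (map_mat complex_of_real A *\<^sub>v X)) \<longleftrightarrow>
    (\<forall>p<d. \<forall>i<n. X $ (p*n+i) = (\<Sum>q<d. wt lam p q * mv (Bf q) n (\<lambda>r. X $ (q*n+r)) i))"
    if X: "X \<in> carrier_vec N" for X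
  proof -
    have U_ent: "(map_mat complex_of_real (blockU n Bs) *\<^sub>v X) $ (p*n+i) = (\<Sum>q<d. if p \<le> q then mv (Bf q) n (\<lambda>r. X $ (q*n+r)) i else 0)"
      if p: "p < d" "i < n" for p i
    proof -
      have "(map_mat complex_of_real (blockU n Bs) *\<^sub>v X) $ (p*n+i) = (\<Sum>k<N. map_mat complex_of_real (blockU n Bs) $$ (p*n+i,k) * X $ k)"
        by (rule mat_vec_sum) (use BUc X lt p in auto)
      also have "\<dots> = (\<Sum>q<d. \<Sum>r<n. map_mat complex_of_real (blockU n Bs) $$ (p*n+i,q*n+r) * X $ (q*n+r))"
        unfolding N_def by (rule sum_blocks)
      also have "\<dots> = (\<Sum>q<d. if p \<le> q then mv (Bf q) n (\<lambda>r. X $ (q*n+r)) i else 0)"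
      proof (rule sum.cong)
        fix q assume q: "q \<in> {..<d}"
        show "(\<Sum>r<n. map_mat complex_of_real (blockU n Bs) $$ (p*n+i,q*n+r) * X $ (q*n+r)) = (if p \<le> q then mv (Bf q) n (\<lambda>r. X $ (q*n+r)) i else 0)"
          unfolding mv_def Bf_def using q p lt[of p i] lt[of q] divmod[OF p(2)]
          by (auto simp: blockU_def N_def d_def divmod intro!: sum.cong)
      qed simp
      finally show ?thesis .
    qed
    have A_ent: "(map_mat complex_of_real A *\<^sub>v X) $ (p*n+i) = X $ (p*n+i) - (\<Sum>q<d. if q < p then mv (Bf q) n (\<lambda>r. X $ (q*n+r)) i else 0)"
      if p: "p < d" "i < n" for p i
    proof -
      have "(map_mat complex_of_real A *\<^sub>v X) $ (p*n+i) = (\<Sum>k<N. map_mat complex_of_real A $$ (p*n+i,k) * X $ k)"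
        by (rule mat_vec_sum) (use Ac X lt p in auto)
      also have "\<dots> = (\<Sum>k<N. (if p*n+i = k then X $ k else 0) - complex_of_real (blockL n Bs $$ (p*n+i,k)) * X $ k)"
      proof (rule sum.cong)
        fix k assume k: "k \<in> {..<N}"
        have j: "p*n+i < N" using lt[OF p] .
        have e1: "map_mat complex_of_real A $$ (p*n+i,k) = complex_of_real (A $$ (p*n+i,k))"
          using Ac j k by simp
        have e2: "A $$ (p*n+i,k) = (if p*n+i = k then 1 else 0) - blockL n Bs $$ (p*n+i,k)"
          unfolding A_def using j k blockL_carrier[of n Bs] by (simp add: N_def d_def)
        show "map_mat complex_of_real A $$ (p*n+i,k) * X $ k = (if p*n+i = k then X $ k else 0) - complex_of_real (blockL n Bs $$ (p*n+i,k)) * X $ k"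
          unfolding e1 e2 by (cases "p*n+i = k") (simp_all add: algebra_simps)
      qed simp
      also have "\<dots> = X $ (p*n+i) - (\<Sum>k<N. complex_of_real (blockL n Bs $$ (p*n+i,k)) * X $ k)"
        using lt[OF p] by (simp add: sum_subtractf sum.delta)
      also have "(\<Sum>k<N. complex_of_real (blockL n Bs $$ (p*n+i,k)) * X $ k) = (\<Sum>q<d. \<Sum>r<n. complex_of_real (blockL n Bs $$ (p*n+i,q*n+r)) * X $ (q*n+r))"
        unfolding N_def by (rule sum_blocks)
      also have "\<dots> = (\<Sum>q<d. if q < p then mv (Bf q) n (\<lambda>r. X $ (q*n+r)) i else 0)"
      proof (rule sum.cong)
        fix q assume q: "q \<in> {..<d}"
        show "(\<Sum>r<n. complex_of_real (blockL n Bs $$ (p*n+i,q*n+r)) * X $ (q*n+r)) = (if q < p then mv (Bf q) n (\<lambda>r. X $ (q*n+r)) i else 0)"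
          unfolding mv_def Bf_def using q p lt[of p i] lt[of q] divmod[OF p(2)]
          by (auto simp: blockL_def N_def d_def divmod intro!: sum.cong)
      qed simp
      finally show ?thesis .
    qed
    have wsum: "(\<Sum>q<d. wt lam p q * c q) = (\<Sum>q<d. if q < p then c q else 0) + inverse lam * (\<Sum>q<d. if p \<le> q then c q else 0)" for p c
      by (auto simp: wt_def sum_distrib_left sum.distrib[symmetric] intro!: sum.cong)
    have "(map_mat complex_of_real (blockU n Bs) *\<^sub>v X = lam \<cdot>\<^sub>v (map_mat complex_of_real A *\<^sub>v X)) \<longleftrightarrow>
       (\<forall>j<N. (map_mat complex_of_real (blockU n Bs) *\<^sub>v X) $ j = lam * (map_mat complex_of_real A *\<^sub>v X) $ j)"
      using BUc Ac by (auto simp: vec_eq_iff)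
    also have "\<dots> \<longleftrightarrow> (\<forall>p<d. \<forall>i<n. (map_mat complex_of_real (blockU n Bs) *\<^sub>v X) $ (p*n+i) = lam * (map_mat complex_of_real A *\<^sub>v X) $ (p*n+i))"
    proof
      assume h: "\<forall>j<N. (map_mat complex_of_real (blockU n Bs) *\<^sub>v X) $ j = lam * (map_mat complex_of_real A *\<^sub>v X) $ j"
      show "\<forall>p<d. \<forall>i<n. (map_mat complex_of_real (blockU n Bs) *\<^sub>v X) $ (p*n+i) = lam * (map_mat complex_of_real A *\<^sub>v X) $ (p*n+i)"
        using h lt by auto
    next
      assume h: "\<forall>p<d. \<forall>i<n. (map_mat complex_of_real (blockU n Bs) *\<^sub>v X) $ (p*n+i) = lam * (map_mat complex_of_real A *\<^sub>v X) $ (p*n+i)"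
      show "\<forall>j<N. (map_mat complex_of_real (blockU n Bs) *\<^sub>v X) $ j = lam * (map_mat complex_of_real A *\<^sub>v X) $ j"
      proof (intro allI impI)
        fix j assume j: "j < N"
        have jd: "j div n < d" using j n unfolding N_def by (simp add: less_mult_imp_div_less)
        have jm: "j mod n < n" using n by simp
        have "j = (j div n) * n + j mod n" by simp
        then show "(map_mat complex_of_real (blockU n Bs) *\<^sub>v X) $ j = lam * (map_mat complex_of_real A *\<^sub>v X) $ j"
          using h jd jm by metis
      qed
    qed
    also have "\<dots> \<longleftrightarrow> (\<forall>p<d. \<forall>i<n. X $ (p*n+i) = (\<Sum>q<d. wt lam p q * mv (Bf q) n (\<lambda>r. X $ (q*n+r)) i))"
    proof -
      have "((map_mat complex_of_real (blockU n Bs) *\<^sub>v X) $ (p*n+i) = lam * (map_mat complex_of_real A *\<^sub>v X) $ (p*n+i))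
         \<longleftrightarrow> (X $ (p*n+i) = (\<Sum>q<d. wt lam p q * mv (Bf q) n (\<lambda>r. X $ (q*n+r)) i))" if p: "p < d" "i < n" for p i
      proof -
        define S1 where "S1 = (\<Sum>q<d. if q < p then mv (Bf q) n (\<lambda>r. X $ (q*n+r)) i else 0)"
        define S2 where "S2 = (\<Sum>q<d. if p \<le> q then mv (Bf q) n (\<lambda>r. X $ (q*n+r)) i else 0)"
        have "(S2 = lam * (X $ (p*n+i) - S1)) \<longleftrightarrow> (X $ (p*n+i) = S1 + inverse lam * S2)"
          using lam by (auto simp: field_simps)
        then show ?thesis unfolding U_ent[OF p] A_ent[OF p] wsum S1_def[symmetric] S2_def[symmetric] .
      qed
      then show ?thesis by auto
    qed
    finally show ?thesis .
  qed
  have Bfe: "(\<lambda>i r. complex_of_real ((Bs!q) $$ (i,r))) = Bf q" for q unfolding Bf_def by simp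
  have "(\<exists>X. X \<in> carrier_vec N \<and> X \<noteq> 0\<^sub>v N \<and> map_mat complex_of_real (blockU n Bs) *\<^sub>v X = lam \<cdot>\<^sub>v (map_mat complex_of_real A *\<^sub>v X))
    \<longleftrightarrow> (\<exists>Y. (\<exists>p<d. \<exists>i<n. Y p i \<noteq> 0) \<and> (\<forall>p<d. \<forall>i<n. Y p i = (\<Sum>q<d. wt lam p q * mv (Bf q) n (Y q) i)))"
  proof
    assume "\<exists>X. X \<in> carrier_vec N \<and> X \<noteq> 0\<^sub>v N \<and> map_mat complex_of_real (blockU n Bs) *\<^sub>v X = lam \<cdot>\<^sub>v (map_mat complex_of_real A *\<^sub>v X)"
    then obtain X where X: "X \<in> carrier_vec N" "X \<noteq> 0\<^sub>v N"
      and e: "map_mat complex_of_real (blockU n Bs) *\<^sub>v X = lam \<cdot>\<^sub>v (map_mat complex_of_real A *\<^sub>v X)" by blast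
    define Y where "Y p i = X $ (p*n+i)" for p i
    have blk: "\<forall>p<d. \<forall>i<n. Y p i = (\<Sum>q<d. wt lam p q * mv (Bf q) n (Y q) i)"
      using e key[OF X(1)] unfolding Y_def by simp
    obtain j where j: "j < N" "X $ j \<noteq> 0" using X by (auto simp: vec_eq_iff)
    have jd: "j div n < d" using j n unfolding N_def by (simp add: less_mult_imp_div_less)
    have jm: "j mod n < n" using n by simp
    have "Y (j div n) (j mod n) \<noteq> 0" unfolding Y_def using j by simp
    then show "\<exists>Y. (\<exists>p<d. \<exists>i<n. Y p i \<noteq> 0) \<and> (\<forall>p<d. \<forall>i<n. Y p i = (\<Sum>q<d. wt lam p q * mv (Bf q) n (Y q) i))"
      using blk jd jm by blast
  next
    assume "\<exists>Y. (\<exists>p<d. \<exists>i<n. Y p i \<noteq> 0) \<and> (\<forall>p<d. \<forall>i<n. Y p i = (\<Sum>q<d. wt lam p q * mv (Bf q) n (Y q) i))"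
    then obtain Y where nz: "\<exists>p<d. \<exists>i<n. Y p i \<noteq> 0"
      and blk: "\<forall>p<d. \<forall>i<n. Y p i = (\<Sum>q<d. wt lam p q * mv (Bf q) n (Y q) i)" by blast
    define X where "X = vec N (\<lambda>j. Y (j div n) (j mod n))"
    have Xc: "X \<in> carrier_vec N" unfolding X_def by simp
    have Xe: "X $ (p*n+i) = Y p i" if "p < d" "i < n" for p i
      unfolding X_def using lt[OF that] divmod[OF that(2)] by simp
    have mvX: "mv (Bf q) n (\<lambda>r. X $ (q*n+r)) i = mv (Bf q) n (Y q) i" if "q < d" for q i
      by (rule mv_cong) (use Xe that in auto)
    have "\<forall>p<d. \<forall>i<n. X $ (p*n+i) = (\<Sum>q<d. wt lam p q * mv (Bf q) n (\<lambda>r. X $ (q*n+r)) i)"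
      using blk Xe mvX by simp
    then have e: "map_mat complex_of_real (blockU n Bs) *\<^sub>v X = lam \<cdot>\<^sub>v (map_mat complex_of_real A *\<^sub>v X)"
      using key[OF Xc] by blast
    from nz obtain p i where pi: "p < d" "i < n" "Y p i \<noteq> 0" by blast
    have "X \<noteq> 0\<^sub>v N"
    proof
      assume "X = 0\<^sub>v N"
      then have "X $ (p*n+i) = 0" using lt[OF pi(1,2)] by simp
      then show False using Xe[OF pi(1,2)] pi(3) by simp
    qed
    then show "\<exists>X. X \<in> carrier_vec N \<and> X \<noteq> 0\<^sub>v N \<and> map_mat complex_of_real (blockU n Bs) *\<^sub>v X = lam \<cdot>\<^sub>v (map_mat complex_of_real A *\<^sub>v X)"
      using Xc e by blast
  qed
  then show ?thesis unfolding eig Bfe d_def .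
qed


lemma sgs_gen:
  fixes Lx Ux Pu Pl :: "complex mat"
  assumes Lx: "Lx \<in> carrier_mat n n" and Ux: "Ux \<in> carrier_mat n n"
    and Pu: "Pu \<in> carrier_mat n n" and Pl: "Pl \<in> carrier_mat n n"
    and u1: "Pu * (1\<^sub>m n - Ux) = 1\<^sub>m n" and u2: "(1\<^sub>m n - Ux) * Pu = 1\<^sub>m n"
    and l1: "Pl * (1\<^sub>m n - Lx) = 1\<^sub>m n" and l2: "(1\<^sub>m n - Lx) * Pl = 1\<^sub>m n"
  shows "eigenvalue (Pu * Lx * Pl * Ux) lam \<longleftrightarrow>
    (\<exists>x s. x \<in> carrier_vec n \<and> s \<in> carrier_vec n \<and> x \<noteq> 0\<^sub>v n \<and>
       s - Lx *\<^sub>v s = Ux *\<^sub>v x \<and> lam \<cdot>\<^sub>v (x - Ux *\<^sub>v x) = Lx *\<^sub>v s)"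
proof -
  have IL: "1\<^sub>m n - Lx \<in> carrier_mat n n" by (rule minus_carrier_mat[OF Lx])
  have IU: "1\<^sub>m n - Ux \<in> carrier_mat n n" by (rule minus_carrier_mat[OF Ux])
  have dr: "dim_row (Pu * Lx * Pl * Ux) = n" using Pu by simp
  have mI: "(1\<^sub>m n - M) *\<^sub>v v = v - M *\<^sub>v v" if "M \<in> carrier_mat n n" "v \<in> carrier_vec n" for M and v :: "complex vec"
    using minus_mult_distrib_mat_vec[OF one_carrier_mat that] that by (simp add: one_mult_mat_vec)
  have Sv: "Pu * Lx * Pl * Ux *\<^sub>v x = Pu *\<^sub>v (Lx *\<^sub>v (Pl *\<^sub>v (Ux *\<^sub>v x)))" if x: "x \<in> carrier_vec n" for x
  proof -
    have c1: "Pu * Lx \<in> carrier_mat n n" using Pu Lx by simp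
    have c2: "Pu * Lx * Pl \<in> carrier_mat n n" using c1 Pl by simp
    have "Pu * Lx * Pl * Ux *\<^sub>v x = (Pu * Lx * Pl) *\<^sub>v (Ux *\<^sub>v x)" by (rule assoc_mult_mat_vec[OF c2 Ux x])
    also have "\<dots> = (Pu * Lx) *\<^sub>v (Pl *\<^sub>v (Ux *\<^sub>v x))" by (rule assoc_mult_mat_vec[OF c1 Pl], use Ux x in simp)
    also have "\<dots> = Pu *\<^sub>v (Lx *\<^sub>v (Pl *\<^sub>v (Ux *\<^sub>v x)))" by (rule assoc_mult_mat_vec[OF Pu Lx], use Pl Ux x in simp)
    finally show ?thesis .
  qed
  show ?thesis
  proof
    assume "eigenvalue (Pu * Lx * Pl * Ux) lam"
    then obtain x where x: "x \<in> carrier_vec n" "x \<noteq> 0\<^sub>v n" and ev: "Pu * Lx * Pl * Ux *\<^sub>v x = lam \<cdot>\<^sub>v x"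
      unfolding eigenvalue_def eigenvector_def dr by blast
    define s where "s = Pl *\<^sub>v (Ux *\<^sub>v x)"
    have sc: "s \<in> carrier_vec n" unfolding s_def using Pl Ux x by simp
    have e1: "s - Lx *\<^sub>v s = Ux *\<^sub>v x"
    proof -
      have "s - Lx *\<^sub>v s = (1\<^sub>m n - Lx) *\<^sub>v s" using mI[OF Lx sc] by simp
      also have "\<dots> = ((1\<^sub>m n - Lx) * Pl) *\<^sub>v (Ux *\<^sub>v x)" unfolding s_def using IL Pl Ux x by (simp add: assoc_mult_mat_vec)
      also have "\<dots> = Ux *\<^sub>v x" using l2 Ux x by (simp add: one_mult_mat_vec)
      finally show ?thesis .
    qed
    have e2: "lam \<cdot>\<^sub>v (x - Ux *\<^sub>v x) = Lx *\<^sub>v s"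
    proof -
      have "lam \<cdot>\<^sub>v (x - Ux *\<^sub>v x) = (1\<^sub>m n - Ux) *\<^sub>v (lam \<cdot>\<^sub>v x)"
        using mI[OF Ux x(1)] IU x by (simp add: mult_mat_vec)
      also have "\<dots> = (1\<^sub>m n - Ux) *\<^sub>v (Pu *\<^sub>v (Lx *\<^sub>v s))" using ev Sv[OF x(1)] unfolding s_def by simp
      also have "\<dots> = ((1\<^sub>m n - Ux) * Pu) *\<^sub>v (Lx *\<^sub>v s)" using IU Pu Lx sc by (simp add: assoc_mult_mat_vec)
      also have "\<dots> = Lx *\<^sub>v s" using u2 Lx sc by (simp add: one_mult_mat_vec)
      finally show ?thesis .
    qed
    show "\<exists>x s. x \<in> carrier_vec n \<and> s \<in> carrier_vec n \<and> x \<noteq> 0\<^sub>v n \<and>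
       s - Lx *\<^sub>v s = Ux *\<^sub>v x \<and> lam \<cdot>\<^sub>v (x - Ux *\<^sub>v x) = Lx *\<^sub>v s"
      using x sc e1 e2 by blast
  next
    assume "\<exists>x s. x \<in> carrier_vec n \<and> s \<in> carrier_vec n \<and> x \<noteq> 0\<^sub>v n \<and>
       s - Lx *\<^sub>v s = Ux *\<^sub>v x \<and> lam \<cdot>\<^sub>v (x - Ux *\<^sub>v x) = Lx *\<^sub>v s"
    then obtain x s where x: "x \<in> carrier_vec n" "x \<noteq> 0\<^sub>v n" and sc: "s \<in> carrier_vec n"
      and e1: "s - Lx *\<^sub>v s = Ux *\<^sub>v x" and e2: "lam \<cdot>\<^sub>v (x - Ux *\<^sub>v x) = Lx *\<^sub>v s" by blast
    have s: "Pl *\<^sub>v (Ux *\<^sub>v x) = s"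
    proof -
      have "Pl *\<^sub>v (Ux *\<^sub>v x) = Pl *\<^sub>v ((1\<^sub>m n - Lx) *\<^sub>v s)" using e1 mI[OF Lx sc] by simp
      also have "\<dots> = (Pl * (1\<^sub>m n - Lx)) *\<^sub>v s" using Pl IL sc by (simp add: assoc_mult_mat_vec)
      also have "\<dots> = s" using l1 sc by (simp add: one_mult_mat_vec)
      finally show ?thesis .
    qed
    have "Pu * Lx * Pl * Ux *\<^sub>v x = Pu *\<^sub>v (Lx *\<^sub>v s)" using Sv[OF x(1)] s by simp
    also have "\<dots> = Pu *\<^sub>v ((1\<^sub>m n - Ux) *\<^sub>v (lam \<cdot>\<^sub>v x))"
      using e2 mI[OF Ux x(1)] IU x by (simp add: mult_mat_vec)
    also have "\<dots> = (Pu * (1\<^sub>m n - Ux)) *\<^sub>v (lam \<cdot>\<^sub>v x)" using Pu IU x by (simp add: assoc_mult_mat_vec)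
    also have "\<dots> = lam \<cdot>\<^sub>v x" using u1 x by (simp add: one_mult_mat_vec)
    finally show "eigenvalue (Pu * Lx * Pl * Ux) lam"
      unfolding eigenvalue_def eigenvector_def dr using x by blast
  qed
qed


lemma mv_map: assumes "M \<in> carrier_mat n n" "v \<in> carrier_vec n" "i < n"
  shows "(map_mat complex_of_real M *\<^sub>v v) $ i = mv (\<lambda>i j. complex_of_real (M $$ (i,j))) n (\<lambda>r. v $ r) i"
  unfolding mv_def using assms by (subst mat_vec_sum[where N=n]) auto

lemma map_one_minus: assumes "M \<in> carrier_mat n n"
  shows "map_mat complex_of_real (1\<^sub>m n - M) = 1\<^sub>m n - map_mat complex_of_real M"
  by (rule eq_matI) (use assms in auto)

lemma sgs_eig:
  fixes L U :: "real mat" and lam :: complex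
  assumes L: "L \<in> carrier_mat n n" and U: "U \<in> carrier_mat n n"
    and Lz: "\<And>i j. i < n \<Longrightarrow> j < n \<Longrightarrow> i \<le> j \<Longrightarrow> L $$ (i,j) = 0"
    and Uz: "\<And>i j. i < n \<Longrightarrow> j < n \<Longrightarrow> j \<le> i \<Longrightarrow> U $$ (i,j) = 0"
    and lam: "lam \<noteq> 0"
  shows "eigenvalue (map_mat complex_of_real (B_sGS n L U)) lam \<longleftrightarrow>
    (\<exists>a b. (\<exists>i<n. b i \<noteq> 0) \<and>
       (\<forall>i<n. a i = mv (\<lambda>i j. complex_of_real (L $$ (i,j))) n a i + inverse lam * mv (\<lambda>i j. complex_of_real (U $$ (i,j))) n b i) \<and>
       (\<forall>i<n. b i = mv (\<lambda>i j. complex_of_real (L $$ (i,j))) n a i + mv (\<lambda>i j. complex_of_real (U $$ (i,j))) n b i))"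
proof -
  define l where "l = (\<lambda>i j. complex_of_real (L $$ (i,j)))"
  define u where "u = (\<lambda>i j. complex_of_real (U $$ (i,j)))"
  have IL: "1\<^sub>m n - L \<in> carrier_mat n n" by (rule minus_carrier_mat[OF L])
  have IU: "1\<^sub>m n - U \<in> carrier_mat n n" by (rule minus_carrier_mat[OF U])
  have dL: "det (1\<^sub>m n - L) = 1"
    by (rule det_unit_lower[OF IL]) (use L Lz in auto)
  have dU: "det (1\<^sub>m n - U) = 1"
    by (rule det_unit_upper[OF IU]) (use U Uz in auto)
  define PL where "PL = inv_mat (1\<^sub>m n - L)"
  define PU where "PU = inv_mat (1\<^sub>m n - U)"
  have PL: "PL \<in> carrier_mat n n" "(1\<^sub>m n - L) * PL = 1\<^sub>m n" "PL * (1\<^sub>m n - L) = 1\<^sub>m n"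
    using inv_mat_props[OF IL] dL unfolding PL_def by auto
  have PU: "PU \<in> carrier_mat n n" "(1\<^sub>m n - U) * PU = 1\<^sub>m n" "PU * (1\<^sub>m n - U) = 1\<^sub>m n"
    using inv_mat_props[OF IU] dU unfolding PU_def by auto
  let ?c = "map_mat complex_of_real"
  have S: "?c (B_sGS n L U) = ?c PU * ?c L * ?c PL * ?c U"
  proof -
    have c1: "PU * L \<in> carrier_mat n n" using PU L by simp
    have c2: "PU * L * PL \<in> carrier_mat n n" using c1 PL by simp
    have "?c (B_sGS n L U) = ?c (PU * L * PL) * ?c U"
      unfolding B_sGS_def PU_def[symmetric] PL_def[symmetric] by (rule of_real_hom.mat_hom_mult[OF c2 U])
    also have "?c (PU * L * PL) = ?c (PU * L) * ?c PL" by (rule of_real_hom.mat_hom_mult[OF c1 PL(1)])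
    also have "?c (PU * L) = ?c PU * ?c L" by (rule of_real_hom.mat_hom_mult[OF PU(1) L])
    finally show ?thesis .
  qed
  have hom1: "?c A * ?c B = 1\<^sub>m n" if "A \<in> carrier_mat n n" "B \<in> carrier_mat n n" "A * B = 1\<^sub>m n" for A B
    using of_real_hom.mat_hom_mult[OF that(1,2), symmetric] that(3) by (simp add: of_real_hom.mat_hom_one)
  have g: "eigenvalue (?c PU * ?c L * ?c PL * ?c U) lam \<longleftrightarrow>
    (\<exists>x s. x \<in> carrier_vec n \<and> s \<in> carrier_vec n \<and> x \<noteq> 0\<^sub>v n \<and>
       s - ?c L *\<^sub>v s = ?c U *\<^sub>v x \<and> lam \<cdot>\<^sub>v (x - ?c U *\<^sub>v x) = ?c L *\<^sub>v s)"
    by (rule sgs_gen)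
      (use L U PU PL hom1[OF PU(1) IU PU(3)] hom1[OF IU PU(1) PU(2)] hom1[OF PL(1) IL PL(3)] hom1[OF IL PL(1) PL(2)]
         map_one_minus[OF L] map_one_minus[OF U] in auto)
  have "(\<exists>x s. x \<in> carrier_vec n \<and> s \<in> carrier_vec n \<and> x \<noteq> 0\<^sub>v n \<and>
       s - ?c L *\<^sub>v s = ?c U *\<^sub>v x \<and> lam \<cdot>\<^sub>v (x - ?c U *\<^sub>v x) = ?c L *\<^sub>v s) \<longleftrightarrow>
    (\<exists>a b. (\<exists>i<n. b i \<noteq> 0) \<and>
       (\<forall>i<n. a i = mv l n a i + inverse lam * mv u n b i) \<and>
       (\<forall>i<n. b i = mv l n a i + mv u n b i))"
  proof
    assume "\<exists>x s. x \<in> carrier_vec n \<and> s \<in> carrier_vec n \<and> x \<noteq> 0\<^sub>v n \<and>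
       s - ?c L *\<^sub>v s = ?c U *\<^sub>v x \<and> lam \<cdot>\<^sub>v (x - ?c U *\<^sub>v x) = ?c L *\<^sub>v s"
    then obtain x s where x: "x \<in> carrier_vec n" "x \<noteq> 0\<^sub>v n" and sc: "s \<in> carrier_vec n"
      and e1: "s - ?c L *\<^sub>v s = ?c U *\<^sub>v x" and e2: "lam \<cdot>\<^sub>v (x - ?c U *\<^sub>v x) = ?c L *\<^sub>v s" by blast
    define a where "a i = inverse lam * s $ i" for i
    define b where "b i = x $ i" for i
    have ml: "mv l n a i = inverse lam * mv l n (\<lambda>r. s $ r) i" for i
      unfolding mv_def a_def by (simp add: sum_distrib_left algebra_simps)
    have E1: "a i = mv l n a i + inverse lam * mv u n b i" if i: "i < n" for i
    proof -
      have "s $ i - mv l n (\<lambda>r. s $ r) i = mv u n b i"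
        using arg_cong[OF e1, of "\<lambda>v. v $ i"] mv_map[OF L sc i] mv_map[OF U x(1) i] sc x i L U
        unfolding l_def u_def b_def by simp
      then show ?thesis unfolding ml a_def by (simp add: algebra_simps flip: distrib_left)
    qed
    have E2: "b i = mv l n a i + mv u n b i" if i: "i < n" for i
    proof -
      have "lam * (b i - mv u n b i) = mv l n (\<lambda>r. s $ r) i"
        using arg_cong[OF e2, of "\<lambda>v. v $ i"] mv_map[OF L sc i] mv_map[OF U x(1) i] sc x i L U
        unfolding l_def u_def b_def by simp
      then show ?thesis unfolding ml using lam by (simp add: field_simps)
    qed
    obtain i where "i < n" "x $ i \<noteq> 0" using x by (auto simp: vec_eq_iff)
    then have "\<exists>i<n. b i \<noteq> 0" unfolding b_def by blast
    then show "\<exists>a b. (\<exists>i<n. b i \<noteq> 0) \<and>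
       (\<forall>i<n. a i = mv l n a i + inverse lam * mv u n b i) \<and>
       (\<forall>i<n. b i = mv l n a i + mv u n b i)" using E1 E2 by blast
  next
    assume "\<exists>a b. (\<exists>i<n. b i \<noteq> 0) \<and>
       (\<forall>i<n. a i = mv l n a i + inverse lam * mv u n b i) \<and>
       (\<forall>i<n. b i = mv l n a i + mv u n b i)"
    then obtain a b where bnz: "\<exists>i<n. b i \<noteq> 0"
      and E1: "\<And>i. i < n \<Longrightarrow> a i = mv l n a i + inverse lam * mv u n b i"
      and E2: "\<And>i. i < n \<Longrightarrow> b i = mv l n a i + mv u n b i" by blast
    define x where "x = vec n b"
    define s where "s = vec n (\<lambda>i. lam * a i)"
    have xc: "x \<in> carrier_vec n" and sc: "s \<in> carrier_vec n" unfolding x_def s_def by auto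
    have mx: "mv u n (\<lambda>r. x $ r) i = mv u n b i" for i by (rule mv_cong) (simp add: x_def)
    have ms: "mv l n (\<lambda>r. s $ r) i = lam * mv l n a i" for i
      unfolding mv_def by (simp add: s_def sum_distrib_left algebra_simps)
    have e1: "s - ?c L *\<^sub>v s = ?c U *\<^sub>v x"
    proof (rule eq_vecI)
      fix i assume "i < dim_vec (?c U *\<^sub>v x)"
      then have i: "i < n" using U by simp
      have "lam * a i - lam * mv l n a i = lam * (inverse lam * mv u n b i)"
        using E1[OF i] by (simp add: algebra_simps)
      then show "(s - ?c L *\<^sub>v s) $ i = (?c U *\<^sub>v x) $ i"
        using mv_map[OF L sc i] mv_map[OF U xc i] sc xc i L U lam
        unfolding l_def[symmetric] u_def[symmetric] ms mx by (simp add: s_def)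
    qed (use L U sc xc in simp)
    have e2: "lam \<cdot>\<^sub>v (x - ?c U *\<^sub>v x) = ?c L *\<^sub>v s"
    proof (rule eq_vecI)
      fix i assume "i < dim_vec (?c L *\<^sub>v s)"
      then have i: "i < n" using L by simp
      have "lam * (b i - mv u n b i) = lam * mv l n a i"
        using E2[OF i] by (simp add: algebra_simps)
      then show "(lam \<cdot>\<^sub>v (x - ?c U *\<^sub>v x)) $ i = (?c L *\<^sub>v s) $ i"
        using mv_map[OF L sc i] mv_map[OF U xc i] sc xc i L U
        unfolding l_def[symmetric] u_def[symmetric] ms mx by (simp add: x_def)
    qed (use L U sc xc in simp)
    have "x \<noteq> 0\<^sub>v n"
    proof
      assume "x = 0\<^sub>v n"
      then have "x $ i = 0" if "i < n" for i using that by simp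
      then have "b i = 0" if "i < n" for i using that unfolding x_def by simp
      then show False using bnz by blast
    qed
    then show "\<exists>x s. x \<in> carrier_vec n \<and> s \<in> carrier_vec n \<and> x \<noteq> 0\<^sub>v n \<and>
       s - ?c L *\<^sub>v s = ?c U *\<^sub>v x \<and> lam \<cdot>\<^sub>v (x - ?c U *\<^sub>v x) = ?c L *\<^sub>v s"
      using xc sc e1 e2 by blast
  qed
  then show ?thesis unfolding S g l_def u_def .
qed


lemma ftc_entries:
  fixes L U :: "real mat"
  assumes q: "q < 2*m" and i: "i < Suc m" and r: "r < Suc m"
  shows "complex_of_real ((B_FTC (Suc m) L U ! q) $$ (i,r)) =
    BC m (\<lambda>i j. complex_of_real (L $$ (i,j))) (\<lambda>i j. complex_of_real (U $$ (i,j))) q i r"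
proof (cases "q < m")
  case True
  then have "B_FTC (Suc m) L U ! q = Lc (Suc m) L q" unfolding B_FTC_def by (simp add: nth_append del: upt_Suc)
  then show ?thesis using True i r by (simp add: Lc_def BC_def)
next
  case False
  then have "B_FTC (Suc m) L U ! q = Uc (Suc m) U (rev [1..<Suc m] ! (q - m))" unfolding B_FTC_def using q by (simp add: nth_append del: upt_Suc)
  also have "rev [1..<Suc m] ! (q - m) = 2*m - q" using False q by (simp add: rev_nth del: upt_Suc)
  finally show ?thesis using False q i r by (simp add: Uc_def BC_def)
qed

lemma ftr_entries:
  fixes L U :: "real mat"
  assumes q: "q < 2*m" and i: "i < Suc m" and r: "r < Suc m"
  shows "complex_of_real ((B_FTR (Suc m) L U ! q) $$ (i,r)) =
    BR m (\<lambda>i j. complex_of_real (L $$ (i,j))) (\<lambda>i j. complex_of_real (U $$ (i,j))) q i r"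
proof (cases "q < m")
  case True
  then have "B_FTR (Suc m) L U ! q = Lr (Suc m) L (Suc q)" unfolding B_FTR_def by (simp add: nth_append del: upt_Suc)
  then show ?thesis using True i r by (auto simp: Lr_def BR_def)
next
  case False
  then have "B_FTR (Suc m) L U ! q = Ur (Suc m) U (rev [0..<m] ! (q - m))" unfolding B_FTR_def using q by (simp add: nth_append del: upt_Suc)
  also have "rev [0..<m] ! (q - m) = 2*m - 1 - q" using False q by (simp add: rev_nth del: upt_Suc)
  finally show ?thesis using False q i r by (auto simp: Ur_def BR_def)
qed

lemma len_FTC: "length (B_FTC (Suc m) L U) = 2*m" unfolding B_FTC_def by simp
lemma len_FTR: "length (B_FTR (Suc m) L U) = 2*m" unfolding B_FTR_def by simp


lemma ftc_eq_m:
  fixes m :: nat and L U :: "real mat" and e :: complex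
  assumes m: "1 \<le> m" and L: "L \<in> carrier_mat (Suc m) (Suc m)" and U: "U \<in> carrier_mat (Suc m) (Suc m)"
    and Lz: "\<And>i j. i < Suc m \<Longrightarrow> j < Suc m \<Longrightarrow> i \<le> j \<Longrightarrow> L $$ (i,j) = 0"
    and Uz: "\<And>i j. i < Suc m \<Longrightarrow> j < Suc m \<Longrightarrow> j \<le> i \<Longrightarrow> U $$ (i,j) = 0"
    and e: "e \<noteq> 0"
  shows "eigenvalue (map_mat complex_of_real (iter_mat (Suc m) (B_FTC (Suc m) L U))) e \<longleftrightarrow>
         eigenvalue (map_mat complex_of_real (B_sGS (Suc m) L U)) e"
proof -
  define l where "l = (\<lambda>i j. complex_of_real (L $$ (i,j)))"
  define u where "u = (\<lambda>i j. complex_of_real (U $$ (i,j)))"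
  have lz: "\<And>i j. i < Suc m \<Longrightarrow> j < Suc m \<Longrightarrow> i \<le> j \<Longrightarrow> l i j = 0" unfolding l_def using Lz by simp
  have uz: "\<And>i j. i < Suc m \<Longrightarrow> j < Suc m \<Longrightarrow> j \<le> i \<Longrightarrow> u i j = 0" unfolding u_def using Uz by simp
  have mveq: "mv (\<lambda>i r. complex_of_real ((B_FTC (Suc m) L U ! q) $$ (i,r))) (Suc m) f i = mv (BC m l u q) (Suc m) f i"
    if "q < 2*m" "i < Suc m" for q i f
    unfolding mv_def l_def u_def using ftc_entries that by (intro sum.cong) auto
  have blk: "(\<forall>p<2*m. \<forall>i<Suc m. Y p i = (\<Sum>q<2*m. wt e p q * mv (\<lambda>i r. complex_of_real ((B_FTC (Suc m) L U ! q) $$ (i,r))) (Suc m) (Y q) i))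
     \<longleftrightarrow> (\<forall>p<2*m. \<forall>i<Suc m. Y p i = (\<Sum>q<2*m. wt e p q * mv (BC m l u q) (Suc m) (Y q) i))" for Y
  proof -
    have "(\<Sum>q<2*m. wt e p q * mv (\<lambda>i r. complex_of_real ((B_FTC (Suc m) L U ! q) $$ (i,r))) (Suc m) (Y q) i)
       = (\<Sum>q<2*m. wt e p q * mv (BC m l u q) (Suc m) (Y q) i)" if "i < Suc m" for p i
      using mveq that by (intro sum.cong) auto
    then show ?thesis by auto
  qed
  have "eigenvalue (map_mat complex_of_real (iter_mat (Suc m) (B_FTC (Suc m) L U))) e \<longleftrightarrow>
    (\<exists>Y. (\<exists>p<2*m. \<exists>i<Suc m. Y p i \<noteq> 0) \<and>
       (\<forall>p<2*m. \<forall>i<Suc m. Y p i = (\<Sum>q<2*m. wt e p q * mv (\<lambda>i r. complex_of_real ((B_FTC (Suc m) L U ! q) $$ (i,r))) (Suc m) (Y q) i)))"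
    using iter_eig[of "Suc m" e "B_FTC (Suc m) L U"] e unfolding len_FTC by simp
  also have "\<dots> \<longleftrightarrow> (\<exists>Y. (\<exists>p<2*m. \<exists>i<Suc m. Y p i \<noteq> 0) \<and>
       (\<forall>p<2*m. \<forall>i<Suc m. Y p i = (\<Sum>q<2*m. wt e p q * mv (BC m l u q) (Suc m) (Y q) i)))"
    using blk by blast
  also have "\<dots> \<longleftrightarrow> (\<exists>a b. (\<exists>i<Suc m. b i \<noteq> 0) \<and>
            (\<forall>i<Suc m. a i = mv l (Suc m) a i + inverse e * mv u (Suc m) b i) \<and>
            (\<forall>i<Suc m. b i = mv l (Suc m) a i + mv u (Suc m) b i))"
    by (rule ftc_core[OF m e lz uz])
  also have "\<dots> \<longleftrightarrow> eigenvalue (map_mat complex_of_real (B_sGS (Suc m) L U)) e"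
    unfolding l_def u_def by (rule sgs_eig[OF L U Lz Uz e, symmetric])
  finally show ?thesis .
qed

lemma ftr_eq_m:
  fixes m :: nat and L U :: "real mat" and e :: complex
  assumes m: "1 \<le> m" and L: "L \<in> carrier_mat (Suc m) (Suc m)" and U: "U \<in> carrier_mat (Suc m) (Suc m)"
    and Lz: "\<And>i j. i < Suc m \<Longrightarrow> j < Suc m \<Longrightarrow> i \<le> j \<Longrightarrow> L $$ (i,j) = 0"
    and Uz: "\<And>i j. i < Suc m \<Longrightarrow> j < Suc m \<Longrightarrow> j \<le> i \<Longrightarrow> U $$ (i,j) = 0"
    and e: "e \<noteq> 0"
  shows "eigenvalue (map_mat complex_of_real (iter_mat (Suc m) (B_FTR (Suc m) L U))) e \<longleftrightarrow>
         eigenvalue (map_mat complex_of_real (B_sGS (Suc m) L U)) e"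
proof -
  define l where "l = (\<lambda>i j. complex_of_real (L $$ (i,j)))"
  define u where "u = (\<lambda>i j. complex_of_real (U $$ (i,j)))"
  have lz: "\<And>i j. i < Suc m \<Longrightarrow> j < Suc m \<Longrightarrow> i \<le> j \<Longrightarrow> l i j = 0" unfolding l_def using Lz by simp
  have uz: "\<And>i j. i < Suc m \<Longrightarrow> j < Suc m \<Longrightarrow> j \<le> i \<Longrightarrow> u i j = 0" unfolding u_def using Uz by simp
  have mveq: "mv (\<lambda>i r. complex_of_real ((B_FTR (Suc m) L U ! q) $$ (i,r))) (Suc m) f i = mv (BR m l u q) (Suc m) f i"
    if "q < 2*m" "i < Suc m" for q i f
    unfolding mv_def l_def u_def using ftr_entries that by (intro sum.cong) auto
  have blk: "(\<forall>p<2*m. \<forall>i<Suc m. Y p i = (\<Sum>q<2*m. wt e p q * mv (\<lambda>i r. complex_of_real ((B_FTR (Suc m) L U ! q) $$ (i,r))) (Suc m) (Y q) i))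
     \<longleftrightarrow> (\<forall>p<2*m. \<forall>i<Suc m. Y p i = (\<Sum>q<2*m. wt e p q * mv (BR m l u q) (Suc m) (Y q) i))" for Y
  proof -
    have "(\<Sum>q<2*m. wt e p q * mv (\<lambda>i r. complex_of_real ((B_FTR (Suc m) L U ! q) $$ (i,r))) (Suc m) (Y q) i)
       = (\<Sum>q<2*m. wt e p q * mv (BR m l u q) (Suc m) (Y q) i)" if "i < Suc m" for p i
      using mveq that by (intro sum.cong) auto
    then show ?thesis by auto
  qed
  have "eigenvalue (map_mat complex_of_real (iter_mat (Suc m) (B_FTR (Suc m) L U))) e \<longleftrightarrow>
    (\<exists>Y. (\<exists>p<2*m. \<exists>i<Suc m. Y p i \<noteq> 0) \<and>
       (\<forall>p<2*m. \<forall>i<Suc m. Y p i = (\<Sum>q<2*m. wt e p q * mv (\<lambda>i r. complex_of_real ((B_FTR (Suc m) L U ! q) $$ (i,r))) (Suc m) (Y q) i)))"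
    using iter_eig[of "Suc m" e "B_FTR (Suc m) L U"] e unfolding len_FTR by simp
  also have "\<dots> \<longleftrightarrow> (\<exists>Y. (\<exists>p<2*m. \<exists>i<Suc m. Y p i \<noteq> 0) \<and>
       (\<forall>p<2*m. \<forall>i<Suc m. Y p i = (\<Sum>q<2*m. wt e p q * mv (BR m l u q) (Suc m) (Y q) i)))"
    using blk by blast
  also have "\<dots> \<longleftrightarrow> (\<exists>a b. (\<exists>i<Suc m. b i \<noteq> 0) \<and>
            (\<forall>i<Suc m. a i = mv l (Suc m) a i + inverse e * mv u (Suc m) b i) \<and>
            (\<forall>i<Suc m. b i = mv l (Suc m) a i + mv u (Suc m) b i))"
    by (rule ftr_core[OF m e lz uz])
  also have "\<dots> \<longleftrightarrow> eigenvalue (map_mat complex_of_real (B_sGS (Suc m) L U)) e"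
    unfolding l_def u_def by (rule sgs_eig[OF L U Lz Uz e, symmetric])
  finally show ?thesis .
qed


theorem theorem6p5:
  fixes n :: nat and L U :: "real mat"
  assumes "n \<ge> 2"
    and "L \<in> carrier_mat n n" and "U \<in> carrier_mat n n"
    and "\<And>i j. i < n \<Longrightarrow> j < n \<Longrightarrow> i \<le> j \<Longrightarrow> L $$ (i,j) = 0"
    and "\<And>i j. i < n \<Longrightarrow> j < n \<Longrightarrow> j \<le> i \<Longrightarrow> U $$ (i,j) = 0"
    and "\<And>j. j < n - 1 \<Longrightarrow> Lc n L j \<noteq> 0\<^sub>m n n"
    and "\<And>j. 1 \<le> j \<Longrightarrow> j < n \<Longrightarrow> Uc n U j \<noteq> 0\<^sub>m n n"
    and "\<And>i. 1 \<le> i \<Longrightarrow> i < n \<Longrightarrow> Lr n L i \<noteq> 0\<^sub>m n n"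
    and "\<And>i. i < n - 1 \<Longrightarrow> Ur n U i \<noteq> 0\<^sub>m n n"
  shows "nonzero_eigs (iter_mat n (B_FTC n L U)) = nonzero_eigs (B_sGS n L U)
       \<and> nonzero_eigs (iter_mat n (B_FTR n L U)) = nonzero_eigs (B_sGS n L U)"
proof -
  obtain m where n: "n = Suc m" using assms(1) by (cases n) auto
  have m: "1 \<le> m" using assms(1) n by simp
  have L': "L \<in> carrier_mat (Suc m) (Suc m)" using assms(2) n by simp
  have U': "U \<in> carrier_mat (Suc m) (Suc m)" using assms(3) n by simp
  have Lz: "\<And>i j. i < Suc m \<Longrightarrow> j < Suc m \<Longrightarrow> i \<le> j \<Longrightarrow> L $$ (i,j) = 0" using assms(4) n by simp
  have Uz: "\<And>i j. i < Suc m \<Longrightarrow> j < Suc m \<Longrightarrow> j \<le> i \<Longrightarrow> U $$ (i,j) = 0" using assms(5) n by simp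
  have FTC: "eigenvalue (map_mat complex_of_real (iter_mat n (B_FTC n L U))) e \<longleftrightarrow>
         eigenvalue (map_mat complex_of_real (B_sGS n L U)) e" if "e \<noteq> 0" for e
    using ftc_eq_m[OF m L' U' Lz Uz that] n by simp
  have FTR: "eigenvalue (map_mat complex_of_real (iter_mat n (B_FTR n L U))) e \<longleftrightarrow>
         eigenvalue (map_mat complex_of_real (B_sGS n L U)) e" if "e \<noteq> 0" for e
    using ftr_eq_m[OF m L' U' Lz Uz that] n by simp
  show ?thesis unfolding nonzero_eigs_def using FTC FTR by auto
qed

end
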